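(* Let $E\in\mathbb N$ and let $0<\eta<\frac{2}{E}$. Let $\ket\Psi=\sum_{k\ge0}\psi_k\ket k$ be a normalised pure state, so $\ket\Psi\!\bra\Psi=\sum_{k,l=0}^{+\infty}\psi_k\psi_l^*\ket k\!\bra l$, and let $\rho=\sum_{k,l=0}^{E}\rho_{kl}\ket k\!\bra l$ be a density operator with support bounded by $E$ in the Fock basis. Then $$\left|F(\Psi,\rho)-\mathbb E_{\alpha\leftarrow Q_\rho}\big[f_\Psi(\alpha,\eta)\big]\right|\le \eta K_\Psi\le \frac{\eta}{2}(E+1)(E+2),$$ where $F(\Psi,\rho)=\bra\Psi\rho\ket\Psi$.
   Context: $\mathcal H$ is the single-mode Hilbert space with Fock basis $\{\ket n\}_{n\in\mathbb N}$; $\ket\alpha$ is a coherent state. The Husimi function is $Q_\rho(\alpha)=\frac1\pi\bra\alpha\rho\ket\alpha$ (the output distribution of heterodyne detection), and $\mathbb E_{\alpha\leftarrow Q_\rho}[g(\alpha)]=\int Q_\rho(\alpha)g(\alpha)d^2\alpha$. For $k,l\ge0$, $\mathcal L_{k,l}(z)=\sum_{p=0}^{\min(k,l)}\frac{\sqrt{k!}\sqrt{l!}(-1)^p}{p!(k-p)!(l-p)!}z^{l-p}z^{*(k-p)}$. For an operator $A=\sum_{k,l}A_{kl}\ket k\!\bra l$, $0<\eta<1$ and the fixed cutoff $E$: $f_A(z,\eta)=\frac1\eta e^{(1-\frac1\eta)|z|^2}\sum_{k,l=0}^E A_{kl}\eta^{-(k+l)/2}\mathcal L_{k,l}(z/\sqrt\eta)$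 and $K_A=\sum_{k,l=0}^E|A_{kl}|\sqrt{(k+1)(l+1)}$. Here $f_\Psi$ and $K_\Psi$ denote $f_A$ and $K_A$ for $A=\ket\Psi\!\bra\Psi$. *)

theory Defs
  imports "HOL-Analysis.Analysis"
begin

text \<open>Operators are represented by their Fock-basis matrix elements
  A k l = <k|A|l>, as functions nat => nat => complex.\<close>

definition coherent :: "complex \<Rightarrow> nat \<Rightarrow> complex" where
  "coherent \<alpha> n = complex_of_real (exp (- (cmod \<alpha>)\<^sup>2 / 2) / sqrt (fact n)) * \<alpha> ^ n"

definition density_op_E :: "nat \<Rightarrow> (nat \<Rightarrow> nat \<Rightarrow> complex) \<Rightarrow> bool" where
  "density_op_E E \<rho> \<longleftrightarrow>
     (\<forall>k l. (k > E \<or> l > E) \<longrightarrow> \<rho> k l = 0) \<and>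
     (\<forall>k l. \<rho> l k = cnj (\<rho> k l)) \<and>
     (\<forall>v :: nat \<Rightarrow> complex.
        Im (\<Sum>k\<le>E. \<Sum>l\<le>E. cnj (v k) * \<rho> k l * v l) = 0 \<and>
        Re (\<Sum>k\<le>E. \<Sum>l\<le>E. cnj (v k) * \<rho> k l * v l) \<ge> 0) \<and>
     (\<Sum>k\<le>E. \<rho> k k) = 1"

definition husimi :: "nat \<Rightarrow> (nat \<Rightarrow> nat \<Rightarrow> complex) \<Rightarrow> complex \<Rightarrow> complex" where
  "husimi E \<rho> \<alpha> = complex_of_real (1 / pi) *
     (\<Sum>k\<le>E. \<Sum>l\<le>E. cnj (coherent \<alpha> k) * \<rho> k l * coherent \<alpha> l)"

definition laguerre2 :: "nat \<Rightarrow> nat \<Rightarrow> complex \<Rightarrow> complex" where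
  "laguerre2 k l z = (\<Sum>p\<le>min k l.
     complex_of_real (sqrt (fact k) * sqrt (fact l) * (-1) ^ p / (fact p * fact (k - p) * fact (l - p)))
     * z ^ (l - p) * (cnj z) ^ (k - p))"

definition f_op :: "nat \<Rightarrow> (nat \<Rightarrow> nat \<Rightarrow> complex) \<Rightarrow> complex \<Rightarrow> real \<Rightarrow> complex" where
  "f_op E A z \<eta> = complex_of_real (1 / \<eta> * exp ((1 - 1 / \<eta>) * (cmod z)\<^sup>2)) *
     (\<Sum>k\<le>E. \<Sum>l\<le>E. A k l * complex_of_real (\<eta> powr (- (real (k + l)) / 2))
        * laguerre2 k l (z / complex_of_real (sqrt \<eta>)))"

definition K_op :: "nat \<Rightarrow> (nat \<Rightarrow> nat \<Rightarrow> complex) \<Rightarrow> real" where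
  "K_op E A = (\<Sum>k\<le>E. \<Sum>l\<le>E. cmod (A k l) * sqrt (real ((k + 1) * (l + 1))))"

definition proj :: "(nat \<Rightarrow> complex) \<Rightarrow> nat \<Rightarrow> nat \<Rightarrow> complex" where
  "proj \<psi> k l = \<psi> k * cnj (\<psi> l)"

definition fidelity :: "nat \<Rightarrow> (nat \<Rightarrow> complex) \<Rightarrow> (nat \<Rightarrow> nat \<Rightarrow> complex) \<Rightarrow> complex" where
  "fidelity E \<psi> \<rho> = (\<Sum>k\<le>E. \<Sum>l\<le>E. cnj (\<psi> k) * \<rho> k l * \<psi> l)"

end

theory Submission
  imports Defs "HOL-Probability.Probability"
begin



lemma meas_Complex[measurable]: "(\<lambda>p::real\<times>real. Complex (fst p) (snd p)) \<in> borel_measurable (lborel \<Otimes>\<^sub>M lborel)"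
proof -
  have "(\<lambda>p::real\<times>real. Complex (fst p) (snd p)) = (\<lambda>p. complex_of_real (fst p) + \<i> * complex_of_real (snd p))"
    by (auto simp: complex_eq_iff)
  then show ?thesis by simp
qed

lemma lborel_complex: "(lborel :: complex measure) = distr (lborel \<Otimes>\<^sub>M lborel) borel (\<lambda>p. Complex (fst p) (snd p))"
proof (rule lborel_eqI)
  fix l u :: complex assume le: "\<And>b. b \<in> Basis \<Longrightarrow> l \<bullet> b \<le> u \<bullet> b"
  then have le1: "Re l \<le> Re u" and le2: "Im l \<le> Im u"
    using le[of 1] le[of \<i>] by (auto simp: Basis_complex_def)
  have pre: "(\<lambda>p. Complex (fst p) (snd p)) -` box l u \<inter> space (lborel \<Otimes>\<^sub>M lborel) = {Re l<..<Re u} \<times> {Im l<..<Im u}"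
    by (auto simp: box_def Basis_complex_def space_pair_measure)
  have "emeasure (distr (lborel \<Otimes>\<^sub>M lborel) borel (\<lambda>p. Complex (fst p) (snd p))) (box l u)
      = emeasure (lborel \<Otimes>\<^sub>M lborel) ({Re l<..<Re u} \<times> {Im l<..<Im u})"
    by (subst emeasure_distr) (auto simp: pre)
  also have "\<dots> = ennreal ((Re u - Re l) * (Im u - Im l))"
    using le1 le2 by (simp add: lborel.emeasure_pair_measure_Times ennreal_mult)
  also have "(Re u - Re l) * (Im u - Im l) = (\<Prod>b\<in>Basis. (u - l) \<bullet> b)"
    by (simp add: Basis_complex_def)
  finally show "emeasure (distr (lborel \<Otimes>\<^sub>M lborel) borel (\<lambda>p. Complex (fst p) (snd p))) (box l u) = (\<Prod>b\<in>Basis. (u - l) \<bullet> b)" .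
qed simp



lemma nd_eq: assumes c: "c > 0"
  shows "normal_density 0 (1 / sqrt (2*c)) x = exp (- c * x\<^sup>2) / sqrt (pi / c)"
proof -
  have s: "(1 / sqrt (2*c))\<^sup>2 = 1 / (2*c)" using c by (simp add: power_divide)
  show ?thesis unfolding normal_density_def s using c
    by (simp add: field_simps real_sqrt_divide)
qed

lemma gauss_abs_moment_integrable: assumes c: "c > 0"
  shows "integrable lborel (\<lambda>x::real. \<bar>x\<bar>^k * exp (- c * x\<^sup>2))"
proof -
  have "integrable lborel (\<lambda>x. sqrt (pi / c) * (normal_density 0 (1 / sqrt (2*c)) x * \<bar>x - 0\<bar>^k))"
    using integrable_normal_moment_abs[of "1 / sqrt (2*c)" 0 k] c by (intro integrable_mult_right) auto
  moreover have "(\<lambda>x. sqrt (pi / c) * (normal_density 0 (1 / sqrt (2*c)) x * \<bar>x - 0\<bar>^k)) = (\<lambda>x::real. \<bar>x\<bar>^k * exp (- c * x\<^sup>2))"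
    using c by (auto simp: nd_eq)
  ultimately show ?thesis by metis
qed

lemma gauss_integral: assumes c: "c > 0"
  shows "(LINT x|lborel. exp (- c * x\<^sup>2)) = sqrt (pi / c)"
proof -
  have "(LINT x|lborel. sqrt (pi / c) * normal_density 0 (1 / sqrt (2*c)) x) = sqrt (pi / c)"
    using integral_normal_density[of "1 / sqrt (2*c)" 0] c by simp
  moreover have "(\<lambda>x. sqrt (pi / c) * normal_density 0 (1 / sqrt (2*c)) x) = (\<lambda>x::real. exp (- c * x\<^sup>2))"
    using c by (auto simp: nd_eq)
  ultimately show ?thesis by simp
qed

lemma h_lim_top: assumes c: "c > 0"
  shows "((\<lambda>x::real. (1 + x)^n * exp (- c * x\<^sup>2)) \<longlongrightarrow> 0) at_top"
proof -
  have f: "filterlim (\<lambda>x::real. c * x\<^sup>2) at_top at_top"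
    using c by (intro filterlim_tendsto_pos_mult_at_top[OF tendsto_const c]) (simp add: filterlim_pow_at_top filterlim_ident)
  have "((\<lambda>t::real. t ^ n / exp t) \<longlongrightarrow> 0) at_top" by (rule tendsto_power_div_exp_0)
  from filterlim_compose[OF this f]
  have lim0: "((\<lambda>x::real. (c * x\<^sup>2) ^ n / exp (c * x\<^sup>2)) \<longlongrightarrow> 0) at_top" .
  have l: "((\<lambda>x::real. (2 / c) ^ n * ((c * x\<^sup>2) ^ n / exp (c * x\<^sup>2))) \<longlongrightarrow> 0) at_top"
    using tendsto_mult[OF tendsto_const[of "(2/c)^n"] lim0] by simp
  show ?thesis
  proof (rule Lim_null_comparison[OF _ l])
    show "\<forall>\<^sub>F x in at_top. norm ((1 + x)^n * exp (- c * x\<^sup>2)) \<le> (2 / c) ^ n * ((c * x\<^sup>2) ^ n / exp (c * x\<^sup>2))"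
      using eventually_ge_at_top[of "1::real"]
    proof eventually_elim
      case (elim x)
      have "(1 + x)^n \<le> (2 * x\<^sup>2)^n"
      proof (rule power_mono)
        have "1 * x \<le> x * x" using elim by (intro mult_right_mono) auto
        then show "1 + x \<le> 2 * x\<^sup>2" using elim unfolding power2_eq_square by linarith
      qed (use elim in auto)
      also have "(2 * x\<^sup>2)^n = ((2 / c) * (c * x\<^sup>2)) ^ n"
        using c by simp
      also have "\<dots> = (2 / c) ^ n * (c * x\<^sup>2) ^ n"
        by (rule power_mult_distrib)
      finally have "(1 + x)^n * exp (- c * x\<^sup>2) \<le> (2 / c) ^ n * (c * x\<^sup>2) ^ n * exp (- c * x\<^sup>2)"
        by (intro mult_right_mono) auto
      moreover have "norm ((1 + x)^n * exp (- c * x\<^sup>2)) = (1 + x)^n * exp (- c * x\<^sup>2)"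
        using elim by (simp add: abs_mult)
      moreover have "(2 / c) ^ n * (c * x\<^sup>2) ^ n * exp (- c * x\<^sup>2) = (2 / c) ^ n * ((c * x\<^sup>2) ^ n / exp (c * x\<^sup>2))"
        by (simp add: exp_minus divide_inverse mult.assoc)
      ultimately show ?case by linarith
    qed
  qed
qed

lemma h_lim_abs: assumes c: "c > 0"
  shows "((\<lambda>x::real. (1 + \<bar>x\<bar>)^n * exp (- c * x\<^sup>2)) \<longlongrightarrow> 0) at_top"
    and "((\<lambda>x::real. (1 + \<bar>x\<bar>)^n * exp (- c * x\<^sup>2)) \<longlongrightarrow> 0) at_bot"
proof -
  have e: "(\<lambda>x::real. (1 + \<bar>x\<bar>)^n * exp (- c * x\<^sup>2)) = (\<lambda>x. (1 + \<bar>x\<bar>)^n * exp (- c * \<bar>x\<bar>\<^sup>2))"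
    by simp
  have fa: "filterlim abs at_top (at_top :: real filter)" "filterlim abs at_top (at_bot :: real filter)"
    using filterlim_abs_real filterlim_compose[OF filterlim_abs_real filterlim_uminus_at_top_at_bot] by auto
  show "((\<lambda>x::real. (1 + \<bar>x\<bar>)^n * exp (- c * x\<^sup>2)) \<longlongrightarrow> 0) at_top"
    unfolding e using filterlim_compose[OF h_lim_top[OF c] fa(1)] by (simp add: o_def)
  show "((\<lambda>x::real. (1 + \<bar>x\<bar>)^n * exp (- c * x\<^sup>2)) \<longlongrightarrow> 0) at_bot"
    unfolding e using filterlim_compose[OF h_lim_top[OF c] fa(2)] by (simp add: o_def)
qed

lemma ftc_zero:
  fixes G G' :: "real \<Rightarrow> complex"
  assumes der: "\<And>x. (G has_vector_derivative G' x) (at x)"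
    and cont: "\<And>x. isCont G' x"
    and int: "integrable lborel G'"
    and c: "c > 0"
    and bnd: "\<And>x. norm (G x) \<le> K * ((1 + \<bar>x\<bar>)^n * exp (- c * x\<^sup>2))"
  shows "integral\<^sup>L lborel G' = 0"
proof -
  have z: "(G \<longlongrightarrow> 0) F" if "((\<lambda>x::real. (1 + \<bar>x\<bar>)^n * exp (- c * x\<^sup>2)) \<longlongrightarrow> 0) F" for F
  proof (rule Lim_null_comparison)
    show "\<forall>\<^sub>F x in F. norm (G x) \<le> K * ((1 + \<bar>x\<bar>)^n * exp (- c * x\<^sup>2))" using bnd by simp
    show "((\<lambda>x. K * ((1 + \<bar>x\<bar>)^n * exp (- c * x\<^sup>2))) \<longlongrightarrow> 0) F"
      using tendsto_mult[OF tendsto_const[of K] that] by simp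
  qed
  have "(LBINT x=-\<infinity>..\<infinity>. G' x) = 0 - 0"
  proof (rule interval_integral_FTC_integrable)
    show "set_integrable lborel (einterval (- \<infinity>) \<infinity>) G'"
      using int by (simp add: set_integrable_def)
    show "((G \<circ> real_of_ereal) \<longlongrightarrow> 0) (at_right (- \<infinity>))"
      unfolding ereal_tendsto_simps1 using z[OF h_lim_abs(2)[OF c]] .
    show "((G \<circ> real_of_ereal) \<longlongrightarrow> 0) (at_left \<infinity>)"
      unfolding ereal_tendsto_simps1 using z[OF h_lim_abs(1)[OF c]] .
  qed (use der cont in auto)
  then show ?thesis
    by (simp add: interval_lebesgue_integral_def set_lebesgue_integral_def)
qed




definition Bf :: "real \<Rightarrow> nat \<Rightarrow> nat \<Rightarrow> real \<times> real \<Rightarrow> complex" where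
  "Bf c a b p = complex_of_real (exp (- c * ((fst p)\<^sup>2 + (snd p)\<^sup>2))) * cnj (Complex (fst p) (snd p)) ^ a * (Complex (fst p) (snd p)) ^ b"

lemma onepow_gauss_integrable: assumes c: "c > 0"
  shows "integrable lborel (\<lambda>x::real. (1 + \<bar>x\<bar>)^n * exp (- c * x\<^sup>2))"
proof (rule Bochner_Integration.integrable_bound)
  show "integrable lborel (\<lambda>x::real. 2^n * (exp (- c * x\<^sup>2) + \<bar>x\<bar>^n * exp (- c * x\<^sup>2)))"
    using gauss_abs_moment_integrable[OF c, of 0] gauss_abs_moment_integrable[OF c, of n] by auto
  show "(\<lambda>x::real. (1 + \<bar>x\<bar>)^n * exp (- c * x\<^sup>2)) \<in> borel_measurable lborel" by measurable
  show "AE x in lborel. norm ((1 + \<bar>x\<bar>)^n * exp (- c * x\<^sup>2)) \<le> norm (2^n * (exp (- c * x\<^sup>2) + \<bar>x\<bar>^n * exp (- c * x\<^sup>2)))"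
  proof (intro AE_I2)
    fix x :: real
    have "(1 + \<bar>x\<bar>)^n \<le> 2^n * (1 + \<bar>x\<bar>^n)"
    proof (cases "\<bar>x\<bar> \<le> 1")
      case True
      then have "(1 + \<bar>x\<bar>)^n \<le> 2^n" by (intro power_mono) auto
      moreover have "(0::real) \<le> 2^n * \<bar>x\<bar>^n" by simp
      moreover have "2^n * (1 + \<bar>x\<bar>^n) = 2^n + 2^n * \<bar>x\<bar>^n" by (simp add: algebra_simps)
      ultimately show ?thesis by linarith
    next
      case False
      then have "(1 + \<bar>x\<bar>)^n \<le> (2 * \<bar>x\<bar>)^n" by (intro power_mono) auto
      moreover have "(0::real) \<le> 2^n" by simp
      moreover have "(2 * \<bar>x\<bar>)^n = 2^n * \<bar>x\<bar>^n" by (rule power_mult_distrib)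
      moreover have "2^n * (1 + \<bar>x\<bar>^n) = 2^n + 2^n * \<bar>x\<bar>^n" by (simp add: algebra_simps)
      ultimately show ?thesis by linarith
    qed
    then have "(1 + \<bar>x\<bar>)^n * exp (- c * x\<^sup>2) \<le> 2^n * (1 + \<bar>x\<bar>^n) * exp (- c * x\<^sup>2)"
      by (intro mult_right_mono) auto
    then show "norm ((1 + \<bar>x\<bar>)^n * exp (- c * x\<^sup>2)) \<le> norm (2^n * (exp (- c * x\<^sup>2) + \<bar>x\<bar>^n * exp (- c * x\<^sup>2)))"
      by (simp add: algebra_simps)
  qed
qed

lemma Bf_alt: "Bf c a b = (\<lambda>p. complex_of_real (exp (- c * ((fst p)\<^sup>2 + (snd p)\<^sup>2))) *
   (complex_of_real (fst p) - \<i> * complex_of_real (snd p)) ^ a * (complex_of_real (fst p) + \<i> * complex_of_real (snd p)) ^ b)"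
  by (auto simp: Bf_def Complex_eq fun_eq_iff)

lemma Bf_meas[measurable]: "Bf c a b \<in> borel_measurable (lborel \<Otimes>\<^sub>M lborel)"
  unfolding Bf_alt by measurable

lemma Bf_cont: "continuous_on UNIV (Bf c a b)"
  unfolding Bf_alt by (intro continuous_intros)

lemma Bf_bound: "norm (Bf c a b (x, y)) \<le> ((1 + \<bar>x\<bar>)^(a+b) * exp (- c * x\<^sup>2)) * ((1 + \<bar>y\<bar>)^(a+b) * exp (- c * y\<^sup>2))"
proof -
  have z: "cmod (Complex x y) \<le> (1 + \<bar>x\<bar>) * (1 + \<bar>y\<bar>)"
  proof -
    have "(1 + \<bar>x\<bar>) * (1 + \<bar>y\<bar>) = 1 + \<bar>x\<bar> + \<bar>y\<bar> + \<bar>x\<bar> * \<bar>y\<bar>" by (simp add: algebra_simps)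
    moreover have "0 \<le> \<bar>x\<bar> * \<bar>y\<bar>" by simp
    moreover have "cmod (Complex x y) \<le> \<bar>x\<bar> + \<bar>y\<bar>" using cmod_le[of "Complex x y"] by simp
    ultimately show ?thesis by linarith
  qed
  have "norm (Bf c a b (x, y)) = exp (- c * (x\<^sup>2 + y\<^sup>2)) * cmod (Complex x y) ^ (a + b)"
    by (simp add: Bf_def norm_mult norm_power power_add)
  also have "\<dots> \<le> exp (- c * (x\<^sup>2 + y\<^sup>2)) * ((1 + \<bar>x\<bar>) * (1 + \<bar>y\<bar>)) ^ (a + b)"
    by (intro mult_left_mono power_mono z) auto
  also have "\<dots> = ((1 + \<bar>x\<bar>)^(a+b) * exp (- c * x\<^sup>2)) * ((1 + \<bar>y\<bar>)^(a+b) * exp (- c * y\<^sup>2))"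
  proof -
    have e1: "((1 + \<bar>x\<bar>) * (1 + \<bar>y\<bar>)) ^ (a + b) = (1 + \<bar>x\<bar>)^(a+b) * (1 + \<bar>y\<bar>)^(a+b)" by (rule power_mult_distrib)
    have e2: "exp (- c * (x\<^sup>2 + y\<^sup>2)) = exp (- c * x\<^sup>2) * exp (- c * y\<^sup>2)" by (simp add: exp_add[symmetric] algebra_simps)
    show ?thesis by (simp only: e1 e2) (simp add: mult_ac)
  qed
  finally show ?thesis .
qed

lemma prod_integrable:
  fixes g h :: "real \<Rightarrow> real"
  assumes g: "integrable lborel g" and h: "integrable lborel h"
  shows "integrable (lborel \<Otimes>\<^sub>M lborel) (\<lambda>p. g (fst p) * h (snd p))"
proof (rule lborel_pair.Fubini_integrable)
  show "(\<lambda>p. g (fst p) * h (snd p)) \<in> borel_measurable (lborel \<Otimes>\<^sub>M lborel)"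
    using g h by measurable
  have "(\<lambda>x. LINT y|lborel. norm (g (fst (x, y)) * h (snd (x, y)))) = (\<lambda>x. \<bar>g x\<bar> * (LINT y|lborel. \<bar>h y\<bar>))"
    by (simp add: abs_mult)
  then show "integrable lborel (\<lambda>x. LINT y|lborel. norm (g (fst (x, y)) * h (snd (x, y))))"
    using g by simp
  show "AE x in lborel. integrable lborel (\<lambda>y. g (fst (x, y)) * h (snd (x, y)))"
    using h by simp
qed

lemma Bf_integrable: assumes c: "c > 0"
  shows "integrable (lborel \<Otimes>\<^sub>M lborel) (Bf c a b)"
proof (rule Bochner_Integration.integrable_bound)
  show "integrable (lborel \<Otimes>\<^sub>M lborel) (\<lambda>p. ((1 + \<bar>fst p\<bar>)^(a+b) * exp (- c * (fst p)\<^sup>2)) * ((1 + \<bar>snd p\<bar>)^(a+b) * exp (- c * (snd p)\<^sup>2)))"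
    using onepow_gauss_integrable[OF c] by (intro prod_integrable)
  show "AE p in lborel \<Otimes>\<^sub>M lborel. norm (Bf c a b p) \<le> norm (((1 + \<bar>fst p\<bar>)^(a+b) * exp (- c * (fst p)\<^sup>2)) * ((1 + \<bar>snd p\<bar>)^(a+b) * exp (- c * (snd p)\<^sup>2)))"
  proof (intro AE_I2)
    fix p :: "real \<times> real"
    obtain x y where p: "p = (x, y)" by force
    show "norm (Bf c a b p) \<le> norm (((1 + \<bar>fst p\<bar>)^(a+b) * exp (- c * (fst p)\<^sup>2)) * ((1 + \<bar>snd p\<bar>)^(a+b) * exp (- c * (snd p)\<^sup>2)))"
      using Bf_bound[of c a b x y] unfolding p by simp
  qed
qed simp

lemma Bf_integrable_x: assumes c: "c > 0"
  shows "integrable lborel (\<lambda>x. Bf c a b (x, y))"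
proof (rule Bochner_Integration.integrable_bound)
  show "integrable lborel (\<lambda>x. ((1 + \<bar>y\<bar>)^(a+b) * exp (- c * y\<^sup>2)) * ((1 + \<bar>x\<bar>)^(a+b) * exp (- c * x\<^sup>2)))"
    using onepow_gauss_integrable[OF c] by (intro integrable_mult_right)
  show "(\<lambda>x. Bf c a b (x, y)) \<in> borel_measurable lborel" by measurable
  show "AE x in lborel. norm (Bf c a b (x, y)) \<le> norm (((1 + \<bar>y\<bar>)^(a+b) * exp (- c * y\<^sup>2)) * ((1 + \<bar>x\<bar>)^(a+b) * exp (- c * x\<^sup>2)))"
    using Bf_bound[of c a b] by (intro AE_I2) (simp add: mult.commute)
qed

lemma Bf_integrable_y: assumes c: "c > 0"
  shows "integrable lborel (\<lambda>y. Bf c a b (x, y))"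
proof (rule Bochner_Integration.integrable_bound)
  show "integrable lborel (\<lambda>y. ((1 + \<bar>x\<bar>)^(a+b) * exp (- c * x\<^sup>2)) * ((1 + \<bar>y\<bar>)^(a+b) * exp (- c * y\<^sup>2)))"
    using onepow_gauss_integrable[OF c] by (intro integrable_mult_right)
  show "(\<lambda>y. Bf c a b (x, y)) \<in> borel_measurable lborel" by measurable
  show "AE y in lborel. norm (Bf c a b (x, y)) \<le> norm (((1 + \<bar>x\<bar>)^(a+b) * exp (- c * x\<^sup>2)) * ((1 + \<bar>y\<bar>)^(a+b) * exp (- c * y\<^sup>2)))"
    using Bf_bound[of c a b] by (intro AE_I2) simp
qed

definition Dx :: "real \<Rightarrow> nat \<Rightarrow> nat \<Rightarrow> real \<times> real \<Rightarrow> complex" where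
  "Dx c a b p = - complex_of_real c * (Bf c a (Suc b) p + Bf c (Suc a) b p) + of_nat a * Bf c (a-1) b p + of_nat b * Bf c a (b-1) p"

definition Dy :: "real \<Rightarrow> nat \<Rightarrow> nat \<Rightarrow> real \<times> real \<Rightarrow> complex" where
  "Dy c a b p = \<i> * complex_of_real c * (Bf c a (Suc b) p - Bf c (Suc a) b p) - \<i> * of_nat a * Bf c (a-1) b p + \<i> * of_nat b * Bf c a (b-1) p"

lemma derx: "((\<lambda>x. Bf c a b (x, y)) has_vector_derivative Dx c a b (x, y)) (at x)"
proof -
  define G where "G = (\<lambda>w::complex. exp (- complex_of_real c * (w\<^sup>2 + (complex_of_real y)\<^sup>2)) * (w - \<i> * complex_of_real y) ^ a * (w + \<i> * complex_of_real y) ^ b)"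
  define G' where "G' = (\<lambda>w::complex. exp (- complex_of_real c * (w\<^sup>2 + (complex_of_real y)\<^sup>2)) * (- complex_of_real c * (2 * w)) * (w - \<i> * complex_of_real y) ^ a * (w + \<i> * complex_of_real y) ^ b
     + exp (- complex_of_real c * (w\<^sup>2 + (complex_of_real y)\<^sup>2)) * (of_nat a * (w - \<i> * complex_of_real y) ^ (a - 1)) * (w + \<i> * complex_of_real y) ^ b
     + exp (- complex_of_real c * (w\<^sup>2 + (complex_of_real y)\<^sup>2)) * (w - \<i> * complex_of_real y) ^ a * (of_nat b * (w + \<i> * complex_of_real y) ^ (b - 1)))"
  have d: "(G has_field_derivative G' w) (at w)" for w
    unfolding G_def G'_def by (auto intro!: derivative_eq_intros simp: algebra_simps)
  have e1: "(\<lambda>x. Bf c a b (x, y)) = (\<lambda>x. G (complex_of_real x))"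
    by (auto simp: Bf_alt G_def fun_eq_iff of_real_exp)
  have e2: "G' (complex_of_real x) = Dx c a b (x, y)"
  proof -
    define A where "A = complex_of_real x - \<i> * complex_of_real y"
    define B where "B = complex_of_real x + \<i> * complex_of_real y"
    define X where "X = exp (- complex_of_real c * ((complex_of_real x)\<^sup>2 + (complex_of_real y)\<^sup>2))"
    have AB: "2 * complex_of_real x = A + B" by (simp add: A_def B_def)
    have "G' (complex_of_real x) = X * (- complex_of_real c * (A + B)) * A ^ a * B ^ b + X * (of_nat a * A ^ (a - 1)) * B ^ b + X * A ^ a * (of_nat b * B ^ (b - 1))"
      unfolding G'_def A_def[symmetric] B_def[symmetric] X_def[symmetric] AB ..
    also have "\<dots> = Dx c a b (x, y)"
    proof -
      have bf: "Bf c a' b' (x, y) = X * A ^ a' * B ^ b'" for a' b'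
        by (simp add: Bf_alt X_def A_def B_def of_real_exp)
      show ?thesis unfolding Dx_def bf by (simp add: algebra_simps)
    qed
    finally show ?thesis .
  qed
  show ?thesis unfolding e1 e2[symmetric] by (rule has_vector_derivative_real_field[OF d])
qed

lemma dery: "((\<lambda>y. Bf c a b (x, y)) has_vector_derivative Dy c a b (x, y)) (at y)"
proof -
  define G where "G = (\<lambda>w::complex. exp (- complex_of_real c * ((complex_of_real x)\<^sup>2 + w\<^sup>2)) * (complex_of_real x - \<i> * w) ^ a * (complex_of_real x + \<i> * w) ^ b)"
  define G' where "G' = (\<lambda>w::complex. exp (- complex_of_real c * ((complex_of_real x)\<^sup>2 + w\<^sup>2)) * (- complex_of_real c * (2 * w)) * (complex_of_real x - \<i> * w) ^ a * (complex_of_real x + \<i> * w) ^ b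
     + exp (- complex_of_real c * ((complex_of_real x)\<^sup>2 + w\<^sup>2)) * (of_nat a * (complex_of_real x - \<i> * w) ^ (a - 1) * (- \<i>)) * (complex_of_real x + \<i> * w) ^ b
     + exp (- complex_of_real c * ((complex_of_real x)\<^sup>2 + w\<^sup>2)) * (complex_of_real x - \<i> * w) ^ a * (of_nat b * (complex_of_real x + \<i> * w) ^ (b - 1) * \<i>))"
  have d: "(G has_field_derivative G' w) (at w)" for w
    unfolding G_def G'_def by (auto intro!: derivative_eq_intros simp: algebra_simps)
  have e1: "(\<lambda>y. Bf c a b (x, y)) = (\<lambda>y. G (complex_of_real y))"
    by (auto simp: Bf_alt G_def fun_eq_iff of_real_exp)
  have e2: "G' (complex_of_real y) = Dy c a b (x, y)"
  proof -
    define A where "A = complex_of_real x - \<i> * complex_of_real y"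
    define B where "B = complex_of_real x + \<i> * complex_of_real y"
    define X where "X = exp (- complex_of_real c * ((complex_of_real x)\<^sup>2 + (complex_of_real y)\<^sup>2))"
    have AB: "2 * complex_of_real y = \<i> * (A - B)" by (simp add: A_def B_def algebra_simps)
    have "G' (complex_of_real y) = X * (- complex_of_real c * (\<i> * (A - B))) * A ^ a * B ^ b + X * (of_nat a * A ^ (a - 1) * (- \<i>)) * B ^ b + X * A ^ a * (of_nat b * B ^ (b - 1) * \<i>)"
      unfolding G'_def A_def[symmetric] B_def[symmetric] X_def[symmetric] AB ..
    also have "\<dots> = Dy c a b (x, y)"
    proof -
      have bf: "Bf c a' b' (x, y) = X * A ^ a' * B ^ b'" for a' b'
        by (simp add: Bf_alt X_def A_def B_def of_real_exp)
      show ?thesis unfolding Dy_def bf by (simp add: algebra_simps)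
    qed
    finally show ?thesis .
  qed
  show ?thesis unfolding e1 e2[symmetric] by (rule has_vector_derivative_real_field[OF d])
qed

definition J :: "real \<Rightarrow> nat \<Rightarrow> nat \<Rightarrow> complex" where
  "J c a b = integral\<^sup>L (lborel \<Otimes>\<^sub>M lborel) (Bf c a b)"

lemma Bf_isCont_x: "isCont (\<lambda>x. Bf c a b (x, y)) x"
  unfolding Bf_alt by (intro continuous_intros)

lemma Bf_isCont_y: "isCont (\<lambda>y. Bf c a b (x, y)) y"
  unfolding Bf_alt by (intro continuous_intros)

lemma int_Dx0: assumes c: "c > 0" shows "integral\<^sup>L (lborel \<Otimes>\<^sub>M lborel) (Dx c a b) = 0"
proof -
  have int0: "integrable (lborel \<Otimes>\<^sub>M lborel) (\<lambda>p. Dx c a b p)"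
    unfolding Dx_def by (simp add: Bf_integrable[OF c])
  have int: "integrable (lborel \<Otimes>\<^sub>M lborel) (\<lambda>(x, y). Dx c a b (x, y))"
    unfolding case_prod_eta using int0 by simp
  have inner: "(LINT x|lborel. Dx c a b (x, y)) = 0" for y
  proof (rule ftc_zero[OF derx _ _ c])
    show "isCont (\<lambda>x. Dx c a b (x, y)) x" for x
      unfolding Dx_def by (intro continuous_intros Bf_isCont_x)
    show "integrable lborel (\<lambda>x. Dx c a b (x, y))"
      unfolding Dx_def by (simp add: Bf_integrable_x[OF c])
    show "norm (Bf c a b (x, y)) \<le> ((1 + \<bar>y\<bar>)^(a+b) * exp (- c * y\<^sup>2)) * ((1 + \<bar>x\<bar>)^(a+b) * exp (- c * x\<^sup>2))" for x
      using Bf_bound[of c a b x y] by (simp add: mult.commute)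
  qed
  have "integral\<^sup>L (lborel \<Otimes>\<^sub>M lborel) (\<lambda>(x, y). Dx c a b (x, y)) = (LINT y|lborel. LINT x|lborel. Dx c a b (x, y))"
    using lborel_pair.integral_snd[OF int] by simp
  also have "\<dots> = 0" by (simp add: inner)
  finally show ?thesis by simp
qed

lemma int_Dy0: assumes c: "c > 0" shows "integral\<^sup>L (lborel \<Otimes>\<^sub>M lborel) (Dy c a b) = 0"
proof -
  have int0: "integrable (lborel \<Otimes>\<^sub>M lborel) (\<lambda>p. Dy c a b p)"
    unfolding Dy_def by (simp add: Bf_integrable[OF c])
  have int: "integrable (lborel \<Otimes>\<^sub>M lborel) (\<lambda>(x, y). Dy c a b (x, y))"
    unfolding case_prod_eta using int0 by simp
  have inner: "(LINT y|lborel. Dy c a b (x, y)) = 0" for x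
  proof (rule ftc_zero[OF dery _ _ c])
    show "isCont (\<lambda>y. Dy c a b (x, y)) y" for y
      unfolding Dy_def by (intro continuous_intros Bf_isCont_y)
    show "integrable lborel (\<lambda>y. Dy c a b (x, y))"
      unfolding Dy_def by (simp add: Bf_integrable_y[OF c])
    show "norm (Bf c a b (x, y)) \<le> ((1 + \<bar>x\<bar>)^(a+b) * exp (- c * x\<^sup>2)) * ((1 + \<bar>y\<bar>)^(a+b) * exp (- c * y\<^sup>2))" for y
      using Bf_bound[of c a b x y] by simp
  qed
  have "integral\<^sup>L (lborel \<Otimes>\<^sub>M lborel) (\<lambda>(x, y). Dy c a b (x, y)) = (LINT x|lborel. LINT y|lborel. Dy c a b (x, y))"
    using lborel_pair.integral_fst[OF int] by simp
  also have "\<dots> = 0" by (simp add: inner)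
  finally show ?thesis by simp
qed

lemma J_rec: assumes c: "c > 0"
  shows "complex_of_real c * J c a (Suc b) = of_nat a * J c (a - 1) b"
proof -
  define P where "P = J c a (Suc b)"
  define Q where "Q = J c (Suc a) b"
  define R where "R = J c (a - 1) b"
  define S where "S = J c a (b - 1)"
  have h1: "- complex_of_real c * (P + Q) + of_nat a * R + of_nat b * S = 0"
    using int_Dx0[OF c, of a b] unfolding Dx_def
    by (simp add: Bf_integrable[OF c] P_def Q_def R_def S_def J_def)
  have h2: "\<i> * complex_of_real c * (P - Q) - \<i> * of_nat a * R + \<i> * of_nat b * S = 0"
    using int_Dy0[OF c, of a b] unfolding Dy_def
    by (simp add: Bf_integrable[OF c] P_def Q_def R_def S_def J_def)
  have "complex_of_real c * P - of_nat a * R =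
     ((- \<i>) * (\<i> * complex_of_real c * (P - Q) - \<i> * of_nat a * R + \<i> * of_nat b * S)
      - (- complex_of_real c * (P + Q) + of_nat a * R + of_nat b * S)) / 2"
    by (simp add: algebra_simps)
  also have "\<dots> = 0" unfolding h1 h2 by simp
  finally show ?thesis unfolding P_def R_def by simp
qed

lemma J_swap: "J c b a = cnj (J c a b)"
proof -
  have "Bf c b a = (\<lambda>p. cnj (Bf c a b p))"
    by (auto simp: Bf_def fun_eq_iff mult_ac)
  then show ?thesis unfolding J_def by simp
qed

lemma J00: assumes c: "c > 0" shows "J c 0 0 = complex_of_real (pi / c)"
proof -
  have "Bf c 0 0 = (\<lambda>p. complex_of_real (exp (- c * (fst p)\<^sup>2) * exp (- c * (snd p)\<^sup>2)))"
    by (auto simp: Bf_def fun_eq_iff exp_add[symmetric] algebra_simps)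
  then have "J c 0 0 = complex_of_real (integral\<^sup>L (lborel \<Otimes>\<^sub>M lborel) (\<lambda>p. exp (- c * (fst p)\<^sup>2) * exp (- c * (snd p)\<^sup>2)))"
    unfolding J_def by (simp only: integral_complex_of_real)
  also have "integral\<^sup>L (lborel \<Otimes>\<^sub>M lborel) (\<lambda>p. exp (- c * (fst p)\<^sup>2) * exp (- c * (snd p)\<^sup>2))
      = (LINT x|lborel. LINT y|lborel. exp (- c * x\<^sup>2) * exp (- c * y\<^sup>2))"
  proof -
    have i: "integrable (lborel \<Otimes>\<^sub>M lborel) (\<lambda>p. exp (- c * (fst p)\<^sup>2) * exp (- c * (snd p)\<^sup>2))"
      using prod_integrable[OF gauss_abs_moment_integrable[OF c, of 0] gauss_abs_moment_integrable[OF c, of 0]]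
      by simp
    show ?thesis using lborel_pair.integral_fst'[OF i] by simp
  qed
  also have "\<dots> = sqrt (pi / c) * sqrt (pi / c)"
  proof -
    have g: "(LINT x|lborel. exp (- (c * x\<^sup>2))) = sqrt (pi / c)" using gauss_integral[OF c] by simp
    show ?thesis by (simp add: g)
  qed
  also have "\<dots> = pi / c" using c by simp
  finally show ?thesis .
qed

lemma J_formula: assumes c: "c > 0"
  shows "J c a b = (if a = b then complex_of_real (pi * fact a / c ^ (a + 1)) else 0)"
proof (induction a arbitrary: b)
  case 0
  show ?case
  proof (cases b)
    case 0 then show ?thesis using J00[OF c] by simp
  next
    case (Suc b')
    have "complex_of_real c * J c 0 (Suc b') = 0" using J_rec[OF c, of 0 b'] by simp
    then show ?thesis using c Suc by simp
  qed
next
  case (Suc a)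
  show ?case
  proof (cases b)
    case 0
    have "complex_of_real c * J c 0 (Suc a) = 0" using J_rec[OF c, of 0 a] by simp
    then have "J c 0 (Suc a) = 0" using c by simp
    then show ?thesis using J_swap[of c "Suc a" 0] 0 by simp
  next
    case (Suc b')
    have "complex_of_real c * J c (Suc a) (Suc b') = of_nat (Suc a) * J c a b'" using J_rec[OF c, of "Suc a" b'] by simp
    then have "J c (Suc a) (Suc b') = of_nat (Suc a) * J c a b' / complex_of_real c" using c
      by (simp add: field_simps)
    also have "\<dots> = (if Suc a = Suc b' then complex_of_real (pi * fact (Suc a) / c ^ (Suc a + 1)) else 0)"
      unfolding Suc.IH using c by (auto simp: field_simps)
    finally show ?thesis using Suc by simp
  qed
qed



lemma gch_diff: "((y + 1::real) gchoose Suc r) - (y gchoose Suc r) = y gchoose r"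
  using gbinomial_Suc_Suc[of y r] by simp

lemma Tsum: "(\<Sum>p\<le>l. (-1)^p * real (l choose p) * ((x - real p) gchoose m)) = (if l \<le> m then (x - real l) gchoose (m - l) else 0)"
proof (induction l arbitrary: x m)
  case 0
  then show ?case by simp
next
  case (Suc l)
  define g where "g = (\<lambda>t::real. t gchoose m)"
  have s0: "(\<Sum>p\<le>Suc l. (-1)^p * real (Suc l choose p) * g (x - real p))
      = g x + (\<Sum>p\<le>l. (-1)^(Suc p) * real (Suc l choose Suc p) * g (x - real (Suc p)))"
    by (subst sum.atMost_Suc_shift) simp
  have s1: "g x + (\<Sum>p\<le>l. (-1)^(Suc p) * real (Suc l choose Suc p) * g (x - real (Suc p))) = g x - (\<Sum>p\<le>l. (-1)^p * real (l choose p) * g (x - 1 - real p))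
                       - (\<Sum>p\<le>l. (-1)^p * real (l choose Suc p) * g (x - 1 - real p))"
    by (simp add: sum_subtractf[symmetric] sum.distrib[symmetric] algebra_simps sum_negf[symmetric])
  have s2: "(\<Sum>p\<le>l. (-1)^p * real (l choose p) * g (x - 1 - real p)) = (if l \<le> m then (x - 1 - real l) gchoose (m - l) else 0)"
    using Suc.IH[of "x - 1" m] by (simp add: g_def algebra_simps)
  have s3: "g x - (\<Sum>p\<le>l. (-1)^p * real (l choose Suc p) * g (x - 1 - real p))
      = (\<Sum>p\<le>l. (-1)^p * real (l choose p) * g (x - real p))"
  proof -
    have "(\<Sum>p\<le>Suc l. (-1)^p * real (l choose p) * g (x - real p))
       = g x + (\<Sum>p\<le>l. (-1)^(Suc p) * real (l choose Suc p) * g (x - real (Suc p)))"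
      by (subst sum.atMost_Suc_shift) simp
    moreover have "(\<Sum>p\<le>Suc l. (-1)^p * real (l choose p) * g (x - real p)) = (\<Sum>p\<le>l. (-1)^p * real (l choose p) * g (x - real p))"
      by simp
    ultimately show ?thesis by (simp add: sum_negf binomial_eq_0 diff_diff_eq)
  qed
  have s4: "(\<Sum>p\<le>l. (-1)^p * real (l choose p) * g (x - real p)) = (if l \<le> m then (x - real l) gchoose (m - l) else 0)"
    using Suc.IH[of x m] by (simp add: g_def)
  have eq: "(\<Sum>p\<le>Suc l. (-1)^p * real (Suc l choose p) * g (x - real p))
     = (if l \<le> m then (x - real l) gchoose (m - l) else 0) - (if l \<le> m then (x - 1 - real l) gchoose (m - l) else 0)"
    using s0 s1 s2 s3 s4 by linarith
  show ?case
  proof (cases "Suc l \<le> m")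
    case True
    then obtain r where r: "m - l = Suc r" "m - Suc l = r" by (metis Suc_diff_le diff_Suc_Suc diff_diff_cancel diff_le_self le_SucI Suc_le_D)
    have "((x - real l) gchoose (m - l)) - ((x - 1 - real l) gchoose (m - l)) = (x - 1 - real l) gchoose r"
      using gch_diff[of "x - 1 - real l" r] r by simp
    then show ?thesis using eq True r by (simp add: g_def algebra_simps)
  next
    case False
    then show ?thesis using eq by (auto simp: g_def)
  qed
qed

lemma term_eq:
  assumes "p \<le> k" "p \<le> l"
  shows "fact (m + k - p) / (fact p * fact (k - p) * fact (l - p)) = (fact m / fact l) * (real (l choose p) * real ((m + k - p) choose m))"
proof -
  have h1: "fact l = fact p * fact (l - p) * real (l choose p)"
    by (metis binomial_fact_lemma of_nat_fact of_nat_mult assms(2))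
  have h2: "fact (m + k - p) = fact m * fact (k - p) * real ((m + k - p) choose m)"
  proof -
    have "m + k - p - m = k - p" using assms by simp
    moreover have "m \<le> m + k - p" using assms by simp
    ultimately show ?thesis
      by (metis binomial_fact_lemma of_nat_fact of_nat_mult)
  qed
  have nz: "real (l choose p) \<noteq> 0" using assms by simp
  show ?thesis unfolding h1 h2 using nz by (simp add: field_simps)
qed

lemma Ssum:
  assumes lmk: "l \<le> m + k"
  shows "(\<Sum>p\<le>min k l. (-1)^p * (fact (m + k - p) / (fact p * fact (k - p) * fact (l - p)))) =
         (if l \<le> m then fact m * fact (m + k - l) / (fact l * fact k * fact (m - l)) else (0::real))"
proof -
  have "(\<Sum>p\<le>min k l. (-1)^p * (fact (m + k - p) / (fact p * fact (k - p) * fact (l - p))))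
     = (\<Sum>p\<le>min k l. (fact m / fact l) * ((-1)^p * real (l choose p) * real ((m + k - p) choose m)))"
    by (intro sum.cong refl) (simp add: term_eq)
  also have "\<dots> = (\<Sum>p\<le>l. (fact m / fact l) * ((-1)^p * real (l choose p) * real ((m + k - p) choose m)))"
  proof (rule sum.mono_neutral_left)
    show "\<forall>i\<in>{..l} - {..min k l}. fact m / fact l * ((- 1) ^ i * real (l choose i) * real ((m + k - i) choose m)) = 0"
      using lmk by (auto simp: binomial_eq_0)
  qed auto
  also have "\<dots> = (fact m / fact l) * (\<Sum>p\<le>l. (-1)^p * real (l choose p) * ((real (m + k) - real p) gchoose m))"
  proof -
    have "real ((m + k - p) choose m) = (real (m + k) - real p) gchoose m" if "p \<le> l" for p
      using that lmk by (simp add: binomial_gbinomial of_nat_diff)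
    then show ?thesis by (simp add: sum_distrib_left)
  qed
  also have "\<dots> = (fact m / fact l) * (if l \<le> m then (real (m + k) - real l) gchoose (m - l) else 0)"
    by (simp only: Tsum)
  also have "\<dots> = (if l \<le> m then fact m * fact (m + k - l) / (fact l * fact k * fact (m - l)) else 0)"
  proof (cases "l \<le> m")
    case True
    have "(real (m + k) - real l) gchoose (m - l) = real ((m + k - l) choose (m - l))"
      using True by (simp add: binomial_gbinomial of_nat_diff)
    also have "\<dots> = fact (m + k - l) / (fact (m - l) * fact k)"
      using True by (simp add: binomial_fact)
    finally show ?thesis using True by simp
  qed simp
  finally show ?thesis .
qed





definition Bc :: "real \<Rightarrow> nat \<Rightarrow> nat \<Rightarrow> complex \<Rightarrow> complex" where
  "Bc c a b z = complex_of_real (exp (- c * (cmod z)\<^sup>2)) * cnj z ^ a * z ^ b"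

lemma Bc_meas[measurable]: "Bc c a b \<in> borel_measurable borel"
  unfolding Bc_def by (intro borel_measurable_continuous_onI continuous_intros)

lemma Bc_Complex: "Bc c a b (Complex (fst p) (snd p)) = Bf c a b p"
  by (simp add: Bc_def Bf_def cmod_power2)

lemma Bc_integrable: assumes c: "c > 0" shows "integrable lborel (Bc c a b)"
proof -
  have "integrable (distr (lborel \<Otimes>\<^sub>M lborel) borel (\<lambda>p. Complex (fst p) (snd p))) (Bc c a b)"
    by (subst integrable_distr_eq) (auto simp: Bc_Complex Bf_integrable[OF c])
  then show ?thesis by (simp add: lborel_complex[symmetric])
qed

lemma Bc_integral: assumes c: "c > 0"
  shows "integral\<^sup>L lborel (Bc c a b) = (if a = b then complex_of_real (pi * fact a / c ^ (a + 1)) else 0)"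
proof -
  have "integral\<^sup>L (distr (lborel \<Otimes>\<^sub>M lborel) borel (\<lambda>p. Complex (fst p) (snd p))) (Bc c a b) = J c a b"
    by (subst integral_distr) (auto simp: Bc_Complex J_def)
  then show ?thesis by (simp add: lborel_complex[symmetric] J_formula[OF c])
qed

definition coefL :: "nat \<Rightarrow> nat \<Rightarrow> nat \<Rightarrow> real" where
  "coefL k l p = sqrt (fact k) * sqrt (fact l) * (-1) ^ p / (fact p * fact (k - p) * fact (l - p))"

definition Tc :: "real \<Rightarrow> (nat \<Rightarrow> nat \<Rightarrow> complex) \<Rightarrow> (nat \<Rightarrow> nat \<Rightarrow> complex) \<Rightarrow> nat \<Rightarrow> nat \<Rightarrow> nat \<Rightarrow> nat \<Rightarrow> nat \<Rightarrow> complex" where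
  "Tc \<eta> \<rho> A m n k l p = complex_of_real (1 / pi * (1 / \<eta>) / (sqrt (fact m) * sqrt (fact n)) * \<eta> powr (- (real (k + l)) / 2) * coefL k l p
      / (sqrt \<eta> ^ (l - p) * sqrt \<eta> ^ (k - p))) * \<rho> m n * A k l"

lemma term_id:
  assumes eta: "\<eta> > 0" and pk: "p \<le> k" and pl: "p \<le> l"
  shows "complex_of_real (1 / pi) * (cnj (coherent \<alpha> m) * \<rho> m n * coherent \<alpha> n) *
    (complex_of_real (1 / \<eta> * exp ((1 - 1 / \<eta>) * (cmod \<alpha>)\<^sup>2)) *
     (A k l * complex_of_real (\<eta> powr (- (real (k + l)) / 2)) *
      (complex_of_real (coefL k l p) * (\<alpha> / complex_of_real (sqrt \<eta>)) ^ (l - p) * cnj (\<alpha> / complex_of_real (sqrt \<eta>)) ^ (k - p))))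
   = Tc \<eta> \<rho> A m n k l p * Bc (1 / \<eta>) (m + k - p) (n + l - p) \<alpha>"
proof -
  define X where "X = cmod \<alpha>"
  define s where "s = sqrt \<eta>"
  have s0: "s > 0" using eta by (simp add: s_def)
  have e: "exp (- (1 / \<eta>) * X\<^sup>2) = exp (- X\<^sup>2 / 2) * exp (- X\<^sup>2 / 2) * exp ((1 - 1 / \<eta>) * X\<^sup>2)"
    by (simp add: exp_add[symmetric] field_simps)
  have p1: "cnj \<alpha> ^ (m + k - p) = cnj \<alpha> ^ m * cnj \<alpha> ^ (k - p)"
    using pk by (simp add: power_add[symmetric])
  have p2: "\<alpha> ^ (n + l - p) = \<alpha> ^ n * \<alpha> ^ (l - p)"
    using pl by (simp add: power_add[symmetric])
  show ?thesis
    unfolding Tc_def Bc_def coherent_def X_def[symmetric] s_def[symmetric] p1 p2 e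
    using s0 by (simp add: power_divide field_simps)
qed

lemma pointwise:
  assumes eta: "\<eta> > 0"
  shows "husimi E \<rho> \<alpha> * f_op E A \<alpha> \<eta> =
    (\<Sum>m\<le>E. \<Sum>n\<le>E. \<Sum>k\<le>E. \<Sum>l\<le>E. \<Sum>p\<le>min k l. Tc \<eta> \<rho> A m n k l p * Bc (1 / \<eta>) (m + k - p) (n + l - p) \<alpha>)"
proof -
  have "husimi E \<rho> \<alpha> * f_op E A \<alpha> \<eta> =
    (\<Sum>m\<le>E. \<Sum>n\<le>E. \<Sum>k\<le>E. \<Sum>l\<le>E. \<Sum>p\<le>min k l.
      complex_of_real (1 / pi) * (cnj (coherent \<alpha> m) * \<rho> m n * coherent \<alpha> n) *
    (complex_of_real (1 / \<eta> * exp ((1 - 1 / \<eta>) * (cmod \<alpha>)\<^sup>2)) *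
     (A k l * complex_of_real (\<eta> powr (- (real (k + l)) / 2)) *
      (complex_of_real (coefL k l p) * (\<alpha> / complex_of_real (sqrt \<eta>)) ^ (l - p) * cnj (\<alpha> / complex_of_real (sqrt \<eta>)) ^ (k - p)))))"
  proof -
    define a where "a = complex_of_real (1 / pi)"
    define b where "b = complex_of_real (1 / \<eta> * exp ((1 - 1 / \<eta>) * (cmod \<alpha>)\<^sup>2))"
    define h where "h = (\<lambda>m n. cnj (coherent \<alpha> m) * \<rho> m n * coherent \<alpha> n)"
    define g where "g = (\<lambda>k l. A k l * complex_of_real (\<eta> powr (- (real (k + l)) / 2)))"
    define q where "q = (\<lambda>k l p. complex_of_real (coefL k l p) * (\<alpha> / complex_of_real (sqrt \<eta>)) ^ (l - p) * cnj (\<alpha> / complex_of_real (sqrt \<eta>)) ^ (k - p))"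
    have "husimi E \<rho> \<alpha> * f_op E A \<alpha> \<eta> = (a * (\<Sum>m\<le>E. \<Sum>n\<le>E. h m n)) * (b * (\<Sum>k\<le>E. \<Sum>l\<le>E. g k l * (\<Sum>p\<le>min k l. q k l p)))"
      unfolding husimi_def f_op_def laguerre2_def coefL_def[symmetric] a_def b_def h_def g_def q_def ..
    also have "\<dots> = (\<Sum>m\<le>E. \<Sum>n\<le>E. (a * h m n) * (b * (\<Sum>k\<le>E. \<Sum>l\<le>E. g k l * (\<Sum>p\<le>min k l. q k l p))))"
    proof -
      have e: "a * (\<Sum>m\<le>E. \<Sum>n\<le>E. h m n) = (\<Sum>m\<le>E. \<Sum>n\<le>E. a * h m n)" by (simp add: sum_distrib_left)
      show ?thesis unfolding e by (simp only: sum_distrib_right)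
    qed
    also have "\<dots> = (\<Sum>m\<le>E. \<Sum>n\<le>E. \<Sum>k\<le>E. \<Sum>l\<le>E. \<Sum>p\<le>min k l. (a * h m n) * (b * (g k l * q k l p)))"
    proof (intro sum.cong refl)
      fix m n
      show "(a * h m n) * (b * (\<Sum>k\<le>E. \<Sum>l\<le>E. g k l * (\<Sum>p\<le>min k l. q k l p))) = (\<Sum>k\<le>E. \<Sum>l\<le>E. \<Sum>p\<le>min k l. (a * h m n) * (b * (g k l * q k l p)))"
        by (simp only: sum_distrib_left)
    qed
    finally show ?thesis unfolding a_def b_def h_def g_def q_def .
  qed
  also have "\<dots> = (\<Sum>m\<le>E. \<Sum>n\<le>E. \<Sum>k\<le>E. \<Sum>l\<le>E. \<Sum>p\<le>min k l. Tc \<eta> \<rho> A m n k l p * Bc (1 / \<eta>) (m + k - p) (n + l - p) \<alpha>)"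
    by (intro sum.cong refl term_id[OF eta]) auto
  finally show ?thesis .
qed

lemma integral_expand:
  assumes eta: "\<eta> > 0"
  shows "(LINT \<alpha>|lborel. husimi E \<rho> \<alpha> * f_op E A \<alpha> \<eta>) =
    (\<Sum>m\<le>E. \<Sum>n\<le>E. \<Sum>k\<le>E. \<Sum>l\<le>E. \<Sum>p\<le>min k l. Tc \<eta> \<rho> A m n k l p *
       (if m + k - p = n + l - p then complex_of_real (pi * fact (m + k - p) / (1 / \<eta>) ^ (m + k - p + 1)) else 0))"
proof -
  have c: "1 / \<eta> > 0" using eta by simp
  show ?thesis
    unfolding pointwise[OF eta]
    by (simp add: integral_sum Bc_integrable[OF c] Bc_integral[OF c] del: Bc_integral)
qed

lemma sqrt_pow_powr: "\<eta> > 0 \<Longrightarrow> sqrt \<eta> ^ j = \<eta> powr (real j / 2)"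
proof -
  assume e: "\<eta> > 0"
  have "sqrt \<eta> ^ j = (\<eta> powr (1/2)) ^ j" using e by (simp add: powr_half_sqrt)
  also have "\<dots> = \<eta> powr (real j * (1/2))" using e by (simp add: powr_power)
  finally show ?thesis by simp
qed

lemma eta_lemma:
  assumes e: "\<eta> > 0" and pk: "p \<le> k" and pl: "p \<le> l"
  shows "(1 / \<eta>) * \<eta> powr (- (real (k + l)) / 2) / (sqrt \<eta> ^ (l - p) * sqrt \<eta> ^ (k - p)) * (1 / (1 / \<eta>) ^ (m + k - p + 1))
    = \<eta> powr (real m - real l)"
proof -
  have a: "1 / \<eta> = \<eta> powr (-1)" using e by (simp add: powr_minus_divide)
  have b: "1 / (1 / \<eta>) ^ (m + k - p + 1) = \<eta> powr (real (m + k - p + 1))"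
  proof -
    have "1 / (1 / \<eta>) ^ (m + k - p + 1) = \<eta> ^ (m + k - p + 1)" by (simp add: power_one_over)
    also have "\<dots> = \<eta> powr (real (m + k - p + 1))" by (rule powr_realpow[OF e, symmetric])
    finally show ?thesis .
  qed
  have "(1 / \<eta>) * \<eta> powr (- (real (k + l)) / 2) / (sqrt \<eta> ^ (l - p) * sqrt \<eta> ^ (k - p)) * (1 / (1 / \<eta>) ^ (m + k - p + 1))
     = \<eta> powr (-1) * \<eta> powr (- (real (k + l)) / 2) / (\<eta> powr (real (l - p) / 2) * \<eta> powr (real (k - p) / 2)) * \<eta> powr (real (m + k - p + 1))"
    by (simp only: b) (simp only: a sqrt_pow_powr[OF e])
  also have "\<dots> = \<eta> powr (-1 + (- (real (k + l)) / 2) - (real (l - p) / 2 + real (k - p) / 2) + real (m + k - p + 1))"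
    by (simp only: powr_add powr_diff)
  also have "-1 + (- (real (k + l)) / 2) - (real (l - p) / 2 + real (k - p) / 2) + real (m + k - p + 1) = real m - real l"
    using pk pl by (simp add: of_nat_diff field_simps)
  finally show ?thesis .
qed

definition wv :: "real \<Rightarrow> nat \<Rightarrow> nat \<Rightarrow> nat \<Rightarrow> real" where
  "wv \<eta> m n l = \<eta> ^ (m - l) * sqrt (real (m choose (m - l))) * sqrt (real (n choose (m - l)))"

lemma fact_sq: "(fact n :: real) = sqrt (fact n) * sqrt (fact n)"
  by simp

lemma wv_closed:
  assumes e: "\<eta> > 0" and lm: "l \<le> m" and n: "n = m + k - l"
  shows "\<eta> powr (real m - real l) * (sqrt (fact k) * sqrt (fact l) / (sqrt (fact m) * sqrt (fact n))) *
     (fact m * fact (m + k - l) / (fact l * fact k * fact (m - l))) = wv \<eta> m n l"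
proof -
  have rd: "real m - real l = real (m - l)" using lm by (simp add: of_nat_diff)
  have p: "\<eta> powr (real m - real l) = \<eta> ^ (m - l)"
    unfolding rd by (rule powr_realpow[OF e])
  have c1: "real (m choose (m - l)) = fact m / (fact (m - l) * fact l)"
    using lm by (simp add: binomial_fact)
  have c2: "real (n choose (m - l)) = fact n / (fact (m - l) * fact k)"
  proof -
    have "n - (m - l) = k" using n lm by simp
    moreover have "m - l \<le> n" using n lm by simp
    ultimately show ?thesis by (simp add: binomial_fact)
  qed
  define sm where "sm = sqrt (fact m :: real)"
  define sn where "sn = sqrt (fact n :: real)"
  define sk where "sk = sqrt (fact k :: real)"
  define sl where "sl = sqrt (fact l :: real)"
  define sj where "sj = sqrt (fact (m - l) :: real)"
  have pos: "sm > 0" "sn > 0" "sk > 0" "sl > 0" "sj > 0" by (simp_all add: sm_def sn_def sk_def sl_def sj_def)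
  have f: "fact m = sm * sm" "fact n = sn * sn" "fact k = sk * sk" "fact l = sl * sl" "fact (m - l) = sj * sj"
    by (simp_all add: sm_def sn_def sk_def sl_def sj_def)
  have s1: "sqrt (real (m choose (m - l))) = sm / (sj * sl)"
    unfolding c1 sm_def sj_def sl_def by (simp add: real_sqrt_divide real_sqrt_mult)
  have s2: "sqrt (real (n choose (m - l))) = sn / (sj * sk)"
    unfolding c2 sn_def sj_def sk_def by (simp add: real_sqrt_divide real_sqrt_mult)
  have w: "wv \<eta> m n l = \<eta> ^ (m - l) * (sm / (sj * sl)) * (sn / (sj * sk))"
    unfolding wv_def s1 s2 ..
  have l: "\<eta> powr (real m - real l) * (sqrt (fact k) * sqrt (fact l) / (sqrt (fact m) * sqrt (fact n))) *
     (fact m * fact (m + k - l) / (fact l * fact k * fact (m - l))) = \<eta> ^ (m - l) * (sk * sl / (sm * sn)) * (sm * sm * (sn * sn) / (sl * sl * (sk * sk) * (sj * sj)))"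
    by (unfold p n[symmetric] sm_def[symmetric] sn_def[symmetric] sk_def[symmetric] sl_def[symmetric], unfold f, rule refl)
  show ?thesis unfolding w l using pos by (simp add: field_simps)
qed


lemma psum:
  assumes e: "\<eta> > 0"
  shows "(\<Sum>p\<le>min k l. Tc \<eta> \<rho> A m n k l p * (if m + k - p = n + l - p then complex_of_real (pi * fact (m + k - p) / (1 / \<eta>) ^ (m + k - p + 1)) else 0))
    = (if m + k = n + l \<and> l \<le> m then \<rho> m n * A k l * complex_of_real (wv \<eta> m n l) else 0)"
proof (cases "m + k = n + l")
  case False
  have "m + k - p \<noteq> n + l - p" if "p \<in> {..min k l}" for p using that False by auto
  then show ?thesis using False by simp
next
  case True
  define c0 where "c0 = \<eta> powr (real m - real l) * (sqrt (fact k) * sqrt (fact l) / (sqrt (fact m) * sqrt (fact n)))"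
  have tm: "Tc \<eta> \<rho> A m n k l p * (if m + k - p = n + l - p then complex_of_real (pi * fact (m + k - p) / (1 / \<eta>) ^ (m + k - p + 1)) else 0)
     = \<rho> m n * A k l * complex_of_real (c0 * ((-1)^p * (fact (m + k - p) / (fact p * fact (k - p) * fact (l - p)))))"
    if p: "p \<in> {..min k l}" for p
  proof -
    have pk: "p \<le> k" and pl: "p \<le> l" using p by auto
    have eq: "m + k - p = n + l - p" using True by simp
    define P1 where "P1 = \<eta> powr (- (real (k + l)) / 2)"
    define S1 where "S1 = sqrt \<eta> ^ (l - p)"
    define S2 where "S2 = sqrt \<eta> ^ (k - p)"
    define Q where "Q = (1 / \<eta>) ^ (m + k - p + 1)"
    have nz: "P1 > 0" "S1 > 0" "S2 > 0" "Q > 0" using e by (simp_all add: P1_def S1_def S2_def Q_def)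
    have el: "(1 / \<eta>) * P1 / (S1 * S2) * (1 / Q) = \<eta> powr (real m - real l)"
      unfolding P1_def S1_def S2_def Q_def by (rule eta_lemma[OF e pk pl])
    have "(1 / pi * (1 / \<eta>) / (sqrt (fact m) * sqrt (fact n)) * P1 * coefL k l p / (S1 * S2)) * (pi * fact (m + k - p) / Q)
       = ((1 / \<eta>) * P1 / (S1 * S2) * (1 / Q)) * (sqrt (fact k) * sqrt (fact l) / (sqrt (fact m) * sqrt (fact n))) * ((-1)^p * (fact (m + k - p) / (fact p * fact (k - p) * fact (l - p))))"
      unfolding coefL_def using nz e by (simp add: field_simps)
    also have "\<dots> = c0 * ((-1)^p * (fact (m + k - p) / (fact p * fact (k - p) * fact (l - p))))"
      unfolding el c0_def ..
    finally have r: "(1 / pi * (1 / \<eta>) / (sqrt (fact m) * sqrt (fact n)) * P1 * coefL k l p / (S1 * S2)) * (pi * fact (m + k - p) / Q)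
       = c0 * ((-1)^p * (fact (m + k - p) / (fact p * fact (k - p) * fact (l - p))))" .
    have "Tc \<eta> \<rho> A m n k l p * (if m + k - p = n + l - p then complex_of_real (pi * fact (m + k - p) / (1 / \<eta>) ^ (m + k - p + 1)) else 0)
      = \<rho> m n * A k l * complex_of_real ((1 / pi * (1 / \<eta>) / (sqrt (fact m) * sqrt (fact n)) * P1 * coefL k l p / (S1 * S2)) * (pi * fact (m + k - p) / Q))"
      unfolding Tc_def P1_def[symmetric] S1_def[symmetric] S2_def[symmetric] Q_def[symmetric] if_P[OF eq] of_real_mult
      by (simp only: mult_ac)
    then show ?thesis by (simp only: r)
  qed
  have "(\<Sum>p\<le>min k l. Tc \<eta> \<rho> A m n k l p * (if m + k - p = n + l - p then complex_of_real (pi * fact (m + k - p) / (1 / \<eta>) ^ (m + k - p + 1)) else 0))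
     = (\<Sum>p\<le>min k l. \<rho> m n * A k l * complex_of_real (c0 * ((-1)^p * (fact (m + k - p) / (fact p * fact (k - p) * fact (l - p))))))"
    by (rule sum.cong[OF refl tm])
  also have "\<dots> = \<rho> m n * A k l * complex_of_real (c0 * (\<Sum>p\<le>min k l. (-1)^p * (fact (m + k - p) / (fact p * fact (k - p) * fact (l - p)))))"
    by (simp add: sum_distrib_left)
  also have "(\<Sum>p\<le>min k l. (-1)^p * (fact (m + k - p) / (fact p * fact (k - p) * fact (l - p))))
     = (if l \<le> m then fact m * fact (m + k - l) / (fact l * fact k * fact (m - l)) else (0::real))"
    using True by (intro Ssum) simp
  finally have fin: "(\<Sum>p\<le>min k l. Tc \<eta> \<rho> A m n k l p * (if m + k - p = n + l - p then complex_of_real (pi * fact (m + k - p) / (1 / \<eta>) ^ (m + k - p + 1)) else 0))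
     = \<rho> m n * A k l * complex_of_real (c0 * (if l \<le> m then fact m * fact (m + k - l) / (fact l * fact k * fact (m - l)) else 0))" .
  show ?thesis
  proof (cases "l \<le> m")
    case lm: True
    have "c0 * (fact m * fact (m + k - l) / (fact l * fact k * fact (m - l))) = wv \<eta> m n l"
      unfolding c0_def using wv_closed[OF e lm, of n k] True by (simp add: mult.assoc)
    then show ?thesis using fin lm True by simp
  qed (use fin in simp)
qed


lemma integral_formula:
  assumes e: "\<eta> > 0"
  shows "(LINT \<alpha>|lborel. husimi E \<rho> \<alpha> * f_op E A \<alpha> \<eta>) =
    (\<Sum>m\<le>E. \<Sum>n\<le>E. \<Sum>k\<le>E. \<Sum>l\<le>E. (if m + k = n + l \<and> l \<le> m then \<rho> m n * A k l * complex_of_real (wv \<eta> m n l) else 0))"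
  by (simp only: integral_expand[OF e] psum[OF e])




lemma sum_two_r:
  assumes "a \<noteq> b" "a \<in> S" "b \<in> S" "finite S"
  shows "(\<Sum>l\<in>S. g l * (if l = a then x else if l = b then y else 0)) = g a * x + g b * (y::complex)"
proof -
  have "(\<Sum>l\<in>S. g l * (if l = a then x else if l = b then y else 0)) = (\<Sum>l\<in>S. (if l = a then g l * x else 0) + (if l = b then g l * y else 0))"
    using assms(1) by (intro sum.cong refl) auto
  also have "\<dots> = g a * x + g b * y" using assms by (simp add: sum.distrib)
  finally show ?thesis .
qed

lemma sum_two_l:
  assumes "a \<noteq> b" "a \<in> S" "b \<in> S" "finite S"
  shows "(\<Sum>l\<in>S. (if l = a then x else if l = b then y else 0) * g l) = x * g a + y * (g b::complex)"
  using sum_two_r[OF assms, of g x y] by (simp add: mult.commute)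

lemma sum_one_r:
  assumes "a \<in> S" "finite S"
  shows "(\<Sum>l\<in>S. g l * (if l = a then x else 0)) = g a * (x::complex)"
proof -
  have "(\<Sum>l\<in>S. g l * (if l = a then x else 0)) = (\<Sum>l\<in>S. (if l = a then g l * x else 0))"
    by (intro sum.cong refl) auto
  also have "\<dots> = g a * x" using assms by simp
  finally show ?thesis .
qed

lemma rho_props:
  assumes "density_op_E E \<rho>"
  shows rho_zero: "k > E \<or> l > E \<Longrightarrow> \<rho> k l = 0"
    and rho_herm: "\<rho> l k = cnj (\<rho> k l)"
    and rho_psd: "Im (\<Sum>k\<le>E. \<Sum>l\<le>E. cnj (v k) * \<rho> k l * v l) = 0 \<and> Re (\<Sum>k\<le>E. \<Sum>l\<le>E. cnj (v k) * \<rho> k l * v l) \<ge> 0"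
    and rho_tr: "(\<Sum>k\<le>E. \<rho> k k) = 1"
  using assms unfolding density_op_E_def by blast+

lemma rho_diag:
  assumes rho: "density_op_E E \<rho>"
  shows "Im (\<rho> a a) = 0 \<and> Re (\<rho> a a) \<ge> 0"
proof (cases "a \<le> E")
  case False
  then show ?thesis using rho_zero[OF rho, of a a] by simp
next
  case True
  define v where "v = (\<lambda>i. if i = a then (1::complex) else 0)"
  have "(\<Sum>k\<le>E. \<Sum>l\<le>E. cnj (v k) * \<rho> k l * v l) = (\<Sum>k\<le>E. (\<rho> k a) * (if k = a then 1 else 0))"
  proof -
    have cv: "cnj (v k) = v k" for k by (simp add: v_def)
    show ?thesis unfolding cv unfolding v_def using True by (subst sum_one_r) (auto simp: mult.commute)
  qed
  also have "\<dots> = \<rho> a a" using True by (subst sum_one_r) auto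
  finally have "(\<Sum>k\<le>E. \<Sum>l\<le>E. cnj (v k) * \<rho> k l * v l) = \<rho> a a" .
  then show ?thesis using rho_psd[OF rho, of v] by simp
qed

lemma rho_off:
  assumes rho: "density_op_E E \<rho>" and s: "s \<ge> 0" and t: "t \<ge> 0"
  shows "2 * s * t * cmod (\<rho> a b) \<le> s\<^sup>2 * Re (\<rho> a a) + t\<^sup>2 * Re (\<rho> b b)"
proof -
  have da: "Im (\<rho> a a) = 0" "Re (\<rho> a a) \<ge> 0" and db: "Im (\<rho> b b) = 0" "Re (\<rho> b b) \<ge> 0"
    using rho_diag[OF rho, of a] rho_diag[OF rho, of b] by auto
  have rhs: "0 \<le> s\<^sup>2 * Re (\<rho> a a) + t\<^sup>2 * Re (\<rho> b b)" using da db by simp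
  show ?thesis
  proof (cases "a = b")
    case True
    have "cmod (\<rho> a a) = Re (\<rho> a a)" using da by (simp add: cmod_eq_Re)
    moreover have "2 * s * t \<le> s\<^sup>2 + t\<^sup>2" using sum_squares_bound[of s t] by simp
    ultimately have "2 * s * t * Re (\<rho> a a) \<le> (s\<^sup>2 + t\<^sup>2) * Re (\<rho> a a)"
      using da by (intro mult_right_mono) auto
    then show ?thesis using True \<open>cmod (\<rho> a a) = Re (\<rho> a a)\<close> by (simp add: distrib_right)
  next
    case ab: False
    show ?thesis
    proof (cases "a \<le> E \<and> b \<le> E \<and> \<rho> a b \<noteq> 0")
      case False
      then have "\<rho> a b = 0" using rho_zero[OF rho, of a b] by auto
      then show ?thesis using rhs by simp
    next
      case True
      then have aE: "a \<le> E" and bE: "b \<le> E" and nz: "\<rho> a b \<noteq> 0" by auto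
      define r where "r = cmod (\<rho> a b)"
      have r: "r > 0" using nz by (simp add: r_def)
      define u where "u = cnj (\<rho> a b) / complex_of_real r"
      have u1: "u * \<rho> a b = complex_of_real r"
      proof -
        have "u * \<rho> a b = (\<rho> a b * cnj (\<rho> a b)) / complex_of_real r" by (simp add: u_def)
        also have "\<dots> = complex_of_real (r * r) / complex_of_real r"
          unfolding complex_norm_square[symmetric] r_def by (simp add: power2_eq_square)
        also have "\<dots> = complex_of_real r" using r by simp
        finally show ?thesis .
      qed
      have u2: "cnj u * \<rho> b a = complex_of_real r"
      proof -
        have "cnj u * \<rho> b a = cnj (u * \<rho> a b)" using rho_herm[OF rho, of a b] by simp
        then show ?thesis by (simp add: u1)
      qed
      have u3: "cnj u * u = 1"
      proof -
        have "cnj u * u = (\<rho> a b * cnj (\<rho> a b)) / (complex_of_real r * complex_of_real r)" by (simp add: u_def)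
        also have "\<dots> = complex_of_real (r * r) / complex_of_real (r * r)"
          unfolding complex_norm_square[symmetric] r_def by (simp add: power2_eq_square)
        also have "\<dots> = 1" using r by simp
        finally show ?thesis .
      qed
      define x where "x = complex_of_real s"
      define y where "y = - complex_of_real t * u"
      define v where "v = (\<lambda>i. if i = a then x else if i = b then y else 0)"
      have cv: "cnj (v i) = (if i = a then cnj x else if i = b then cnj y else 0)" for i
        by (simp add: v_def)
      have "(\<Sum>k\<le>E. \<Sum>l\<le>E. cnj (v k) * \<rho> k l * v l) = (\<Sum>k\<le>E. cnj (v k) * (\<Sum>l\<le>E. \<rho> k l * v l))"
        by (simp add: sum_distrib_left mult.assoc)
      also have "\<dots> = (\<Sum>k\<le>E. cnj (v k) * (\<rho> k a * x + \<rho> k b * y))"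
      proof -
        have inner: "(\<Sum>l\<le>E. \<rho> k l * v l) = \<rho> k a * x + \<rho> k b * y" for k
          unfolding v_def using ab aE bE by (intro sum_two_r) auto
        show ?thesis by (simp only: inner)
      qed
      also have "\<dots> = cnj x * (\<rho> a a * x + \<rho> a b * y) + cnj y * (\<rho> b a * x + \<rho> b b * y)"
        unfolding cv using ab aE bE by (intro sum_two_l) auto
      also have "\<dots> = complex_of_real (s\<^sup>2) * \<rho> a a + complex_of_real (t\<^sup>2) * (cnj u * u) * \<rho> b b
          - complex_of_real (s * t) * (u * \<rho> a b) - complex_of_real (s * t) * (cnj u * \<rho> b a)"
        unfolding x_def y_def of_real_mult power2_eq_square complex_cnj_mult complex_cnj_minus complex_cnj_complex_of_real
        by algebra
      also have "\<dots> = complex_of_real (s\<^sup>2) * \<rho> a a + complex_of_real (t\<^sup>2) * \<rho> b b - complex_of_real (2 * s * t * r)"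
        unfolding u1 u2 u3 of_real_mult of_real_numeral by algebra
      finally have "Re (\<Sum>k\<le>E. \<Sum>l\<le>E. cnj (v k) * \<rho> k l * v l) = s\<^sup>2 * Re (\<rho> a a) + t\<^sup>2 * Re (\<rho> b b) - 2 * s * t * r"
        by simp
      then show ?thesis using rho_psd[OF rho, of v] by (simp add: r_def)
    qed
  qed
qed

lemma binom_bound:
  assumes e: "\<eta> > 0" and eE: "\<eta> * real E < 2"
  shows "1 \<le> j \<Longrightarrow> l + j \<le> E \<Longrightarrow> \<eta> ^ j * real ((l + j) choose j) \<le> \<eta> * real (l + 1)"
proof (induction j)
  case 0 then show ?case by simp
next
  case (Suc j)
  show ?case
  proof (cases "j = 0")
    case True then show ?thesis by simp
  next
    case False
    then have ih: "\<eta> ^ j * real ((l + j) choose j) \<le> \<eta> * real (l + 1)" using Suc by simp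
    have rec: "real ((l + Suc j) choose Suc j) * real (Suc j) = real (Suc (l + j)) * real ((l + j) choose j)"
      using Suc_times_binomial_eq[of "l + j" j] by (metis add_Suc_right of_nat_mult)
    have ratio: "\<eta> * real (Suc (l + j)) \<le> real (Suc j)"
    proof -
      have "real (Suc (l + j)) \<le> real E" using Suc.prems by simp
      then have "\<eta> * real (Suc (l + j)) \<le> \<eta> * real E" using e by (intro mult_left_mono) auto
      also have "\<dots> < 2" by (rule eE)
      also have "2 \<le> real (Suc j)" using False by simp
      finally show ?thesis by simp
    qed
    have "\<eta> ^ Suc j * real ((l + Suc j) choose Suc j) * real (Suc j) = (\<eta> * real (Suc (l + j))) * (\<eta> ^ j * real ((l + j) choose j))"
      by (simp only: mult.assoc rec power_Suc) (simp add: mult_ac)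
    also have "\<dots> \<le> real (Suc j) * (\<eta> * real (l + 1))"
      by (rule mult_mono[OF ratio ih]) (use e in auto)
    finally have "\<eta> ^ Suc j * real ((l + Suc j) choose Suc j) * real (Suc j) \<le> (\<eta> * real (l + 1)) * real (Suc j)"
      by (simp add: mult_ac)
    then show ?thesis by (rule mult_right_le_imp_le) simp
  qed
qed

lemma sum_single_le:
  fixes X :: "nat \<Rightarrow> real" and E g :: nat
  assumes X: "X i \<ge> 0" and c: "\<And>n. c n \<Longrightarrow> n = g"
  shows "(\<Sum>n\<le>E. (if c n then X i else 0)) \<le> X i"
proof -
  define Z where "Z = (if c g then X i else 0)"
  have "(\<Sum>n\<le>E. (if c n then X i else 0)) = (\<Sum>n\<le>E. (if n = g then Z else 0))"
    using c unfolding Z_def by (intro sum.cong refl) auto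
  also have "\<dots> = (if g \<le> E then Z else 0)" by simp
  also have "\<dots> \<le> X i" using X by (auto simp: Z_def)
  finally show ?thesis .
qed

lemma D_bound:
  assumes rho: "density_op_E E \<rho>" and e: "\<eta> > 0" and eE: "\<eta> * real E < 2"
  shows "cmod (\<Sum>m\<le>E. \<Sum>n\<le>E. (if m + k = n + l \<and> l < m then \<rho> m n * complex_of_real (wv \<eta> m n l) else 0))
     \<le> \<eta> * sqrt (real ((k + 1) * (l + 1)))"
proof -
  define K where "K = real (k + 1)"
  define L where "L = real (l + 1)"
  have K: "K > 0" and L: "L > 0" by (simp_all add: K_def L_def)
  define \<sigma> where "\<sigma> = sqrt K / sqrt L"
  have sg: "\<sigma> > 0" using K L by (simp add: \<sigma>_def)
  define R where "R = (\<lambda>i. Re (\<rho> i i))"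
  have R0: "R i \<ge> 0" for i using rho_diag[OF rho, of i] by (simp add: R_def)
  define cnd where "cnd = (\<lambda>m n. m + k = n + l \<and> l < m)"
  have wv0: "wv \<eta> m n l \<ge> 0" for m n using e by (simp add: wv_def)
  have step_a: "cmod (\<Sum>m\<le>E. \<Sum>n\<le>E. (if cnd m n then \<rho> m n * complex_of_real (wv \<eta> m n l) else 0))
      \<le> (\<Sum>m\<le>E. \<Sum>n\<le>E. (if cnd m n then cmod (\<rho> m n) * wv \<eta> m n l else 0))"
  proof -
    have "cmod (\<Sum>m\<le>E. \<Sum>n\<le>E. (if cnd m n then \<rho> m n * complex_of_real (wv \<eta> m n l) else 0))
       \<le> (\<Sum>m\<le>E. cmod (\<Sum>n\<le>E. (if cnd m n then \<rho> m n * complex_of_real (wv \<eta> m n l) else 0)))"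
      by (rule norm_sum)
    also have "\<dots> \<le> (\<Sum>m\<le>E. \<Sum>n\<le>E. cmod (if cnd m n then \<rho> m n * complex_of_real (wv \<eta> m n l) else 0))"
      by (intro sum_mono norm_sum)
    also have "\<dots> = (\<Sum>m\<le>E. \<Sum>n\<le>E. (if cnd m n then cmod (\<rho> m n) * wv \<eta> m n l else 0))"
      using wv0 by (intro sum.cong refl) (simp add: norm_mult)
    finally show ?thesis .
  qed
  have step_b: "(if cnd m n then cmod (\<rho> m n) * wv \<eta> m n l else 0)
      \<le> (if cnd m n then \<eta> / 2 * (\<sigma> * L * R m) else 0) + (if cnd m n then \<eta> / 2 * (K / \<sigma> * R n) else 0)"
    if mE: "m \<le> E" and nE: "n \<le> E" for m n
  proof (cases "cnd m n")
    case False then show ?thesis by simp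
  next
    case True
    define j where "j = m - l"
    have j1: "1 \<le> j" and mj: "m = l + j" and nj: "n = k + j" using True by (auto simp: cnd_def j_def)
    define Cm where "Cm = real (m choose j)"
    define Cn where "Cn = real (n choose j)"
    have Cm0: "Cm \<ge> 0" and Cn0: "Cn \<ge> 0" by (simp_all add: Cm_def Cn_def)
    have w: "wv \<eta> m n l = \<eta> ^ j * (sqrt Cm * sqrt Cn)" by (simp add: wv_def Cm_def Cn_def j_def)
    have st: "sqrt (\<sigma> * Cm) * sqrt (Cn / \<sigma>) = sqrt Cm * sqrt Cn"
      using sg by (simp add: real_sqrt_mult[symmetric] field_simps)
    have ro: "2 * sqrt (\<sigma> * Cm) * sqrt (Cn / \<sigma>) * cmod (\<rho> m n) \<le> (sqrt (\<sigma> * Cm))\<^sup>2 * R m + (sqrt (Cn / \<sigma>))\<^sup>2 * R n"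
      unfolding R_def by (rule rho_off[OF rho]) (use sg Cm0 Cn0 in auto)
    have sq: "(sqrt (\<sigma> * Cm))\<^sup>2 = \<sigma> * Cm" "(sqrt (Cn / \<sigma>))\<^sup>2 = Cn / \<sigma>" using sg Cm0 Cn0 by simp_all
    have ro2: "2 * (sqrt Cm * sqrt Cn) * cmod (\<rho> m n) \<le> \<sigma> * Cm * R m + Cn / \<sigma> * R n"
      using ro unfolding sq mult.assoc[symmetric] by (simp add: st[symmetric] mult.assoc)
    have bm: "\<eta> ^ j * Cm \<le> \<eta> * L"
      using binom_bound[OF e eE j1, of l] mE unfolding Cm_def L_def mj by simp
    have bn: "\<eta> ^ j * Cn \<le> \<eta> * K"
      using binom_bound[OF e eE j1, of k] nE unfolding Cn_def K_def nj by simp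
    have ej: "\<eta> ^ j > 0" using e by simp
    have "cmod (\<rho> m n) * wv \<eta> m n l = \<eta> ^ j / 2 * (2 * (sqrt Cm * sqrt Cn) * cmod (\<rho> m n))"
      unfolding w by simp
    also have "\<dots> \<le> \<eta> ^ j / 2 * (\<sigma> * Cm * R m + Cn / \<sigma> * R n)"
      using ro2 ej by (intro mult_left_mono) auto
    also have "\<dots> = 1 / 2 * (\<sigma> * R m * (\<eta> ^ j * Cm) + R n / \<sigma> * (\<eta> ^ j * Cn))"
      by (simp add: field_simps)
    also have "\<dots> \<le> 1 / 2 * (\<sigma> * R m * (\<eta> * L) + R n / \<sigma> * (\<eta> * K))"
      using bm bn sg R0[of m] R0[of n]
      by (intro mult_left_mono add_mono mult_left_mono) (auto intro: divide_nonneg_pos)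
    also have "\<dots> = \<eta> / 2 * (\<sigma> * L * R m) + \<eta> / 2 * (K / \<sigma> * R n)"
      by (simp add: field_simps)
    finally show ?thesis using True by simp
  qed
  have step_c1: "(\<Sum>m\<le>E. \<Sum>n\<le>E. (if cnd m n then \<eta> / 2 * (\<sigma> * L * R m) else 0)) \<le> (\<Sum>m\<le>E. \<eta> / 2 * (\<sigma> * L * R m))"
  proof (rule sum_mono)
    fix m assume "m \<in> {..E}"
    show "(\<Sum>n\<le>E. (if cnd m n then \<eta> / 2 * (\<sigma> * L * R m) else 0)) \<le> \<eta> / 2 * (\<sigma> * L * R m)"
    proof (rule sum_single_le[of "\<lambda>m. \<eta> / 2 * (\<sigma> * L * R m)" m "cnd m" "m + k - l" E])
      show "0 \<le> \<eta> / 2 * (\<sigma> * L * R m)" using e sg L R0[of m] by simp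
    qed (auto simp: cnd_def)
  qed
  have step_c2: "(\<Sum>m\<le>E. \<Sum>n\<le>E. (if cnd m n then \<eta> / 2 * (K / \<sigma> * R n) else 0)) \<le> (\<Sum>n\<le>E. \<eta> / 2 * (K / \<sigma> * R n))"
  proof -
    have "(\<Sum>m\<le>E. \<Sum>n\<le>E. (if cnd m n then \<eta> / 2 * (K / \<sigma> * R n) else 0)) = (\<Sum>n\<le>E. \<Sum>m\<le>E. (if cnd m n then \<eta> / 2 * (K / \<sigma> * R n) else 0))"
      by (rule sum.swap)
    also have "\<dots> \<le> (\<Sum>n\<le>E. \<eta> / 2 * (K / \<sigma> * R n))"
    proof (rule sum_mono)
      fix n assume "n \<in> {..E}"
      show "(\<Sum>m\<le>E. (if cnd m n then \<eta> / 2 * (K / \<sigma> * R n) else 0)) \<le> \<eta> / 2 * (K / \<sigma> * R n)"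
      proof (rule sum_single_le[of "\<lambda>n. \<eta> / 2 * (K / \<sigma> * R n)" n "\<lambda>m. cnd m n" "n + l - k" E])
        show "0 \<le> \<eta> / 2 * (K / \<sigma> * R n)" using e sg K R0[of n] by simp
      qed (auto simp: cnd_def)
    qed
    finally show ?thesis .
  qed
  have Rsum: "(\<Sum>i\<le>E. R i) = 1"
    using rho_tr[OF rho] unfolding R_def by (metis Re_sum one_complex.sel(1))
  have "cmod (\<Sum>m\<le>E. \<Sum>n\<le>E. (if cnd m n then \<rho> m n * complex_of_real (wv \<eta> m n l) else 0))
      \<le> (\<Sum>m\<le>E. \<Sum>n\<le>E. (if cnd m n then \<eta> / 2 * (\<sigma> * L * R m) else 0) + (if cnd m n then \<eta> / 2 * (K / \<sigma> * R n) else 0))"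
    using step_a by (rule order_trans) (intro sum_mono step_b, auto)
  also have "\<dots> = (\<Sum>m\<le>E. \<Sum>n\<le>E. (if cnd m n then \<eta> / 2 * (\<sigma> * L * R m) else 0)) + (\<Sum>m\<le>E. \<Sum>n\<le>E. (if cnd m n then \<eta> / 2 * (K / \<sigma> * R n) else 0))"
    by (simp add: sum.distrib)
  also have "\<dots> \<le> (\<Sum>m\<le>E. \<eta> / 2 * (\<sigma> * L * R m)) + (\<Sum>n\<le>E. \<eta> / 2 * (K / \<sigma> * R n))"
    by (rule add_mono[OF step_c1 step_c2])
  also have "\<dots> = \<eta> / 2 * (\<sigma> * L) + \<eta> / 2 * (K / \<sigma>)"
  proof -
    have "(\<Sum>m\<le>E. \<eta> / 2 * (\<sigma> * L * R m)) = \<eta> / 2 * (\<sigma> * L) * (\<Sum>m\<le>E. R m)"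
      by (simp add: sum_distrib_left mult_ac)
    moreover have "(\<Sum>n\<le>E. \<eta> / 2 * (K / \<sigma> * R n)) = \<eta> / 2 * (K / \<sigma>) * (\<Sum>n\<le>E. R n)"
      by (simp add: sum_distrib_left sum_divide_distrib mult_ac)
    ultimately show ?thesis by (simp add: Rsum)
  qed
  also have "\<dots> = \<eta> * sqrt (real ((k + 1) * (l + 1)))"
  proof -
    have sL: "sqrt L * sqrt L = L" and sK: "sqrt K * sqrt K = K" using L K by simp_all
    have pL: "sqrt L > 0" and pK: "sqrt K > 0" using L K by simp_all
    have "\<sigma> * L = sqrt K / sqrt L * (sqrt L * sqrt L)" unfolding sL \<sigma>_def ..
    have a1: "\<sigma> * L = sqrt K * sqrt L" using pL L by (simp add: \<sigma>_def field_simps)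
    have "K / \<sigma> = (sqrt K * sqrt K) / (sqrt K / sqrt L)" unfolding sK \<sigma>_def ..
    have a2: "K / \<sigma> = sqrt K * sqrt L" using pL pK K by (simp add: \<sigma>_def field_simps)
    have a3: "sqrt (real ((k + 1) * (l + 1))) = sqrt K * sqrt L" by (simp only: K_def L_def of_nat_mult real_sqrt_mult)
    show ?thesis unfolding a1 a2 a3 by simp
  qed
  finally show ?thesis unfolding cnd_def .
qed




lemma sum4_swap:
  "(\<Sum>m\<in>A. \<Sum>n\<in>B. \<Sum>k\<in>C. \<Sum>l\<in>D. G m n k l) = (\<Sum>k\<in>C. \<Sum>l\<in>D. \<Sum>m\<in>A. \<Sum>n\<in>B. (G m n k l :: complex))"
proof -
  have "(\<Sum>m\<in>A. \<Sum>n\<in>B. \<Sum>k\<in>C. \<Sum>l\<in>D. G m n k l) = (\<Sum>m\<in>A. \<Sum>k\<in>C. \<Sum>n\<in>B. \<Sum>l\<in>D. G m n k l)"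
    by (rule sum.cong[OF refl]) (rule sum.swap)
  also have "\<dots> = (\<Sum>k\<in>C. \<Sum>m\<in>A. \<Sum>n\<in>B. \<Sum>l\<in>D. G m n k l)"
    by (rule sum.swap)
  also have "\<dots> = (\<Sum>k\<in>C. \<Sum>m\<in>A. \<Sum>l\<in>D. \<Sum>n\<in>B. G m n k l)"
    by (intro sum.cong[OF refl]) (rule sum.swap)
  also have "\<dots> = (\<Sum>k\<in>C. \<Sum>l\<in>D. \<Sum>m\<in>A. \<Sum>n\<in>B. G m n k l)"
    by (rule sum.cong[OF refl]) (rule sum.swap)
  finally show ?thesis .
qed

lemma error_repr:
  assumes e: "\<eta> > 0"
  shows "fidelity E \<psi> \<rho> - (LINT \<alpha>|lborel. husimi E \<rho> \<alpha> * f_op E (proj \<psi>) \<alpha> \<eta>)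
     = - (\<Sum>k\<le>E. \<Sum>l\<le>E. proj \<psi> k l * (\<Sum>m\<le>E. \<Sum>n\<le>E. (if m + k = n + l \<and> l < m then \<rho> m n * complex_of_real (wv \<eta> m n l) else 0)))"
proof -
  define A where "A = proj \<psi>"
  define P where "P = (\<lambda>m n k l. if m + k = n + l \<and> l = m then \<rho> m n * A k l else 0)"
  define Q where "Q = (\<lambda>m n k l. if m + k = n + l \<and> l < m then \<rho> m n * A k l * complex_of_real (wv \<eta> m n l) else 0)"
  have split: "(if m + k = n + l \<and> l \<le> m then \<rho> m n * A k l * complex_of_real (wv \<eta> m n l) else 0) = P m n k l + Q m n k l" for m n k l
    by (auto simp: P_def Q_def wv_def)
  have I: "(LINT \<alpha>|lborel. husimi E \<rho> \<alpha> * f_op E A \<alpha> \<eta>) =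
      (\<Sum>m\<le>E. \<Sum>n\<le>E. \<Sum>k\<le>E. \<Sum>l\<le>E. P m n k l) + (\<Sum>m\<le>E. \<Sum>n\<le>E. \<Sum>k\<le>E. \<Sum>l\<le>E. Q m n k l)"
    unfolding integral_formula[OF e] split by (simp add: sum.distrib)
  have Pval: "(\<Sum>m\<le>E. \<Sum>n\<le>E. \<Sum>k\<le>E. \<Sum>l\<le>E. P m n k l) = fidelity E \<psi> \<rho>"
  proof -
    have inner: "(\<Sum>k\<le>E. \<Sum>l\<le>E. P m n k l) = \<rho> m n * A n m" if "n \<le> E" "m \<le> E" for m n
    proof -
      have pe: "(\<Sum>l\<le>E. P m n k l) = (if k = n then \<rho> m n * A k m else 0)" for k
      proof (cases "k = n")
        case True
        have "(\<Sum>l\<le>E. P m n k l) = (\<Sum>l\<le>E. if l = m then \<rho> m n * A k l else 0)"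
          using True by (intro sum.cong refl) (auto simp: P_def)
        also have "\<dots> = \<rho> m n * A k m" using that by simp
        finally show ?thesis using True by simp
      next
        case False
        have "(\<Sum>l\<le>E. P m n k l) = (\<Sum>l\<le>E. 0)"
          using False by (intro sum.cong refl) (auto simp: P_def)
        then show ?thesis using False by simp
      qed
      have "(\<Sum>k\<le>E. \<Sum>l\<le>E. P m n k l) = (\<Sum>k\<le>E. if k = n then \<rho> m n * A k m else 0)"
        by (simp only: pe)
      also have "\<dots> = \<rho> m n * A n m" using that by simp
      finally show ?thesis .
    qed
    have "(\<Sum>m\<le>E. \<Sum>n\<le>E. \<Sum>k\<le>E. \<Sum>l\<le>E. P m n k l) = (\<Sum>m\<le>E. \<Sum>n\<le>E. \<rho> m n * A n m)"
      by (intro sum.cong refl inner) auto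
    also have "\<dots> = fidelity E \<psi> \<rho>"
      unfolding fidelity_def A_def Defs.proj_def by (intro sum.cong refl) (simp add: mult_ac)
    finally show ?thesis .
  qed
  have Qval: "(\<Sum>m\<le>E. \<Sum>n\<le>E. \<Sum>k\<le>E. \<Sum>l\<le>E. Q m n k l)
     = (\<Sum>k\<le>E. \<Sum>l\<le>E. A k l * (\<Sum>m\<le>E. \<Sum>n\<le>E. (if m + k = n + l \<and> l < m then \<rho> m n * complex_of_real (wv \<eta> m n l) else 0)))"
  proof -
    have qe: "Q m n k l = A k l * (if m + k = n + l \<and> l < m then \<rho> m n * complex_of_real (wv \<eta> m n l) else 0)" for m n k l
      by (simp add: Q_def mult_ac)
    show ?thesis by (subst sum4_swap) (simp only: qe sum_distrib_left)
  qed
  show ?thesis unfolding A_def[symmetric] I Pval Qval by simp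
qed



lemma sum_lin: "(\<Sum>l\<le>E. real (l + 1)) = real ((E + 1) * (E + 2)) / 2"
  by (induction E) (auto simp: algebra_simps)

lemma K_bound:
  assumes normalised: "(\<lambda>k. (cmod (\<psi> k))\<^sup>2) sums 1"
  shows "K_op E (proj \<psi>) \<le> real ((E + 1) * (E + 2)) / 2"
proof -
  define a where "a = (\<lambda>k. cmod (\<psi> k))"
  define T where "T = (\<Sum>l\<le>E. real (l + 1))"
  have S2: "(\<Sum>k\<le>E. (a k)\<^sup>2) \<le> 1"
  proof -
    have "(\<Sum>k\<le>E. (a k)\<^sup>2) \<le> (\<Sum>k. (cmod (\<psi> k))\<^sup>2)"
      unfolding a_def using normalised by (intro sum_le_suminf) (auto simp: sums_summable)
    also have "\<dots> = 1" using normalised by (simp add: sums_unique[symmetric])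
    finally show ?thesis .
  qed
  have tb: "a k * a l * sqrt (real ((k + 1) * (l + 1))) \<le> ((a k)\<^sup>2 * real (l + 1) + (a l)\<^sup>2 * real (k + 1)) / 2" for k l
  proof -
    define x where "x = a k * sqrt (real (l + 1))"
    define y where "y = a l * sqrt (real (k + 1))"
    have "2 * x * y \<le> x\<^sup>2 + y\<^sup>2" using sum_squares_bound[of x y] by simp
    moreover have "x * y = a k * a l * sqrt (real ((k + 1) * (l + 1)))"
      unfolding x_def y_def of_nat_mult real_sqrt_mult by (simp only: mult_ac)
    moreover have "x\<^sup>2 = (a k)\<^sup>2 * real (l + 1)" "y\<^sup>2 = (a l)\<^sup>2 * real (k + 1)"
      by (simp_all add: x_def y_def power_mult_distrib del: of_nat_Suc)
    ultimately show ?thesis by (simp add: mult.assoc)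
  qed
  have "K_op E (proj \<psi>) = (\<Sum>k\<le>E. \<Sum>l\<le>E. a k * a l * sqrt (real ((k + 1) * (l + 1))))"
    unfolding K_op_def Defs.proj_def a_def by (simp add: norm_mult)
  also have "\<dots> \<le> (\<Sum>k\<le>E. \<Sum>l\<le>E. ((a k)\<^sup>2 * real (l + 1) + (a l)\<^sup>2 * real (k + 1)) / 2)"
    by (intro sum_mono tb)
  also have "\<dots> = ((\<Sum>k\<le>E. (a k)\<^sup>2) * T + (\<Sum>l\<le>E. (a l)\<^sup>2) * T) / 2"
  proof -
    have "(\<Sum>k\<le>E. \<Sum>l\<le>E. ((a k)\<^sup>2 * real (l + 1) + (a l)\<^sup>2 * real (k + 1)) / 2)
        = ((\<Sum>k\<le>E. \<Sum>l\<le>E. (a k)\<^sup>2 * real (l + 1)) + (\<Sum>k\<le>E. \<Sum>l\<le>E. (a l)\<^sup>2 * real (k + 1))) / 2"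
      by (simp add: sum.distrib sum_divide_distrib add_divide_distrib)
    also have "(\<Sum>k\<le>E. \<Sum>l\<le>E. (a k)\<^sup>2 * real (l + 1)) = (\<Sum>k\<le>E. (a k)\<^sup>2) * T"
    proof -
      have "(\<Sum>k\<le>E. \<Sum>l\<le>E. (a k)\<^sup>2 * real (l + 1)) = (\<Sum>k\<le>E. (a k)\<^sup>2 * T)"
        unfolding T_def by (simp add: sum_distrib_left)
      also have "\<dots> = (\<Sum>k\<le>E. (a k)\<^sup>2) * T" by (simp add: sum_distrib_right)
      finally show ?thesis .
    qed
    also have "(\<Sum>k\<le>E. \<Sum>l\<le>E. (a l)\<^sup>2 * real (k + 1)) = (\<Sum>l\<le>E. (a l)\<^sup>2) * T"
    proof -
      have "(\<Sum>k\<le>E. \<Sum>l\<le>E. (a l)\<^sup>2 * real (k + 1)) = (\<Sum>l\<le>E. \<Sum>k\<le>E. (a l)\<^sup>2 * real (k + 1))"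
        by (rule sum.swap)
      also have "\<dots> = (\<Sum>l\<le>E. (a l)\<^sup>2 * T)"
        unfolding T_def by (simp add: sum_distrib_left)
      also have "\<dots> = (\<Sum>l\<le>E. (a l)\<^sup>2) * T" by (simp add: sum_distrib_right)
      finally show ?thesis .
    qed
    finally show ?thesis .
  qed
  also have "\<dots> = (\<Sum>k\<le>E. (a k)\<^sup>2) * T" by simp
  also have "\<dots> \<le> 1 * T"
    using S2 by (intro mult_right_mono) (auto simp: T_def intro: sum_nonneg)
  also have "\<dots> = real ((E + 1) * (E + 2)) / 2" unfolding T_def sum_lin by simp
  finally show ?thesis .
qed

theorem corollary1:
  fixes E :: nat and \<eta> :: real and \<psi> :: "nat \<Rightarrow> complex"
    and \<rho> :: "nat \<Rightarrow> nat \<Rightarrow> complex"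
  assumes eta_pos: "0 < \<eta>" and eta_lt1: "\<eta> < 1" and eta_E: "\<eta> * real E < 2"
    and normalised: "(\<lambda>k. (cmod (\<psi> k))\<^sup>2) sums 1"
    and rho: "density_op_E E \<rho>"
  shows "cmod (fidelity E \<psi> \<rho> - (LINT \<alpha>|lborel. husimi E \<rho> \<alpha> * f_op E (proj \<psi>) \<alpha> \<eta>))
           \<le> \<eta> * K_op E (proj \<psi>)
       \<and> \<eta> * K_op E (proj \<psi>) \<le> \<eta> / 2 * real ((E + 1) * (E + 2))"
proof
  define D where "D = (\<lambda>k l. \<Sum>m\<le>E. \<Sum>n\<le>E. (if m + k = n + l \<and> l < m then \<rho> m n * complex_of_real (wv \<eta> m n l) else 0))"
  have "cmod (fidelity E \<psi> \<rho> - (LINT \<alpha>|lborel. husimi E \<rho> \<alpha> * f_op E (proj \<psi>) \<alpha> \<eta>))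
      = cmod (\<Sum>k\<le>E. \<Sum>l\<le>E. proj \<psi> k l * D k l)"
    unfolding error_repr[OF eta_pos] D_def by (simp only: norm_minus_cancel)
  also have "\<dots> \<le> (\<Sum>k\<le>E. \<Sum>l\<le>E. cmod (proj \<psi> k l * D k l))"
    by (rule order_trans[OF norm_sum sum_mono[OF norm_sum]])
  also have "\<dots> \<le> (\<Sum>k\<le>E. \<Sum>l\<le>E. cmod (proj \<psi> k l) * (\<eta> * sqrt (real ((k + 1) * (l + 1)))))"
    unfolding norm_mult D_def
    by (intro sum_mono mult_left_mono D_bound[OF rho eta_pos eta_E]) auto
  also have "\<dots> = \<eta> * K_op E (proj \<psi>)"
    by (simp add: K_op_def sum_distrib_left mult_ac)
  finally show "cmod (fidelity E \<psi> \<rho> - (LINT \<alpha>|lborel. husimi E \<rho> \<alpha> * f_op E (proj \<psi>) \<alpha> \<eta>))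
           \<le> \<eta> * K_op E (proj \<psi>)" .
next
  have "\<eta> * K_op E (proj \<psi>) \<le> \<eta> * (real ((E + 1) * (E + 2)) / 2)"
    using K_bound[OF normalised, of E] eta_pos by (intro mult_left_mono) auto
  then show "\<eta> * K_op E (proj \<psi>) \<le> \<eta> / 2 * real ((E + 1) * (E + 2))" by simp
qed


end
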